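(* Let $\mathbb{K}$ be a field of characteristic zero and let $\mathcal{D}=\{\Delta^{p(1)}_{\beta(1)},\ldots,\Delta^{p(k)}_{\beta(k)}\}$ be a finite set of derivations of $\mathbb{K}[x_1,\ldots,x_n]$ of the form $\Delta^{p}_{\beta}=x_1^{p_1}\cdots x_n^{p_n}\sum_{j=1}^n\beta_jx_j\partial_j$ with $p(i)\in\mathbb{Z}^n_{\ge 0}$ and $\beta(i)\in\mathbb{K}^n\setminus\{0\}$, all of positive weight, i.e. $p(i)\neq 0$ for all $i$. Then the Lie algebra $\mathfrak{g}(\mathcal{D})$ generated by $\mathcal{D}$ is finite dimensional if and only if the elements of $\mathcal{D}$ can be renumbered in such a way that the following two conditions hold: 1) if $\beta(i)$ and $\beta(j)$ are proportional, then $\langle\beta(i),p(i)-p(j)\rangle=0$; 2) if $\beta(i)$ and $\beta(j)$ are not proportional and $j>i$, then $\langle\beta(j),p(i)\rangle=0$ and there exists $r_{ij}\in\mathbb{Z}_{\ge 0}$ such that $\langle\beta(i),p(j)+r_{ij}p(i)\rangle=0$.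
   Context: $\partial_i=\partial/\partial x_i$. For $\beta\in\mathbb{K}^n$ and $u\in\mathbb{Z}^n$, $\langle\beta,u\rangle:=\sum_{i=1}^n\beta_iu_i$. The weight of $\Delta^p_\beta$ is $\sum_j p_j$. The Lie bracket is the commutator of derivations, $[D_1,D_2]=D_1\circ D_2-D_2\circ D_1$, and $\mathfrak{g}(\mathcal{D})$ is the smallest Lie subalgebra of the Lie algebra of derivations of $\mathbb{K}[x_1,\ldots,x_n]$ containing $\mathcal{D}$. *)

theory Defs
  imports Main "HOL-Library.Poly_Mapping"
begin

text \<open>Polynomials in the variables indexed by the finite type 'n (so n = CARD('n))
  with coefficients in 'k: finitely supported maps from monomials (exponent vectors)
  to coefficients.\<close>
type_synonym ('n, 'k) mpoly = "('n \<Rightarrow>\<^sub>0 nat) \<Rightarrow>\<^sub>0 'k"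

definition const :: "'k::comm_semiring_1 \<Rightarrow> ('n, 'k) mpoly" where
  "const c = Poly_Mapping.single 0 c"

definition var :: "'n \<Rightarrow> ('n, 'k::comm_semiring_1) mpoly" where
  "var j = Poly_Mapping.single (Poly_Mapping.single j 1) 1"

definition pd :: "'n \<Rightarrow> ('n, 'k::comm_semiring_1) mpoly \<Rightarrow> ('n, 'k) mpoly" where
  "pd j f = (\<Sum>(m::'n \<Rightarrow>\<^sub>0 nat)\<in>Poly_Mapping.keys f. Poly_Mapping.single (m - Poly_Mapping.single j 1)
                              (of_nat (Poly_Mapping.lookup m j) * Poly_Mapping.lookup f m))"

definition Delta :: "('n::finite \<Rightarrow> nat) \<Rightarrow> ('n \<Rightarrow> 'k::comm_semiring_1)
                       \<Rightarrow> ('n, 'k) mpoly \<Rightarrow> ('n, 'k) mpoly" where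
  "Delta p \<beta> f = (\<Prod>j\<in>UNIV. var j ^ p j) * (\<Sum>j\<in>UNIV. const (\<beta> j) * (var j * pd j f))"

definition lie_bracket :: "('a \<Rightarrow> 'a::ab_group_add) \<Rightarrow> ('a \<Rightarrow> 'a) \<Rightarrow> 'a \<Rightarrow> 'a" where
  "lie_bracket D1 D2 = (\<lambda>f. D1 (D2 f) - D2 (D1 f))"

inductive_set lie_gen :: "(('n, 'k::comm_ring_1) mpoly \<Rightarrow> ('n, 'k) mpoly) set
                          \<Rightarrow> (('n, 'k) mpoly \<Rightarrow> ('n, 'k) mpoly) set"
  for D where
    base: "d \<in> D \<Longrightarrow> d \<in> lie_gen D"
  | zero: "(\<lambda>f. 0) \<in> lie_gen D"
  | add: "a \<in> lie_gen D \<Longrightarrow> b \<in> lie_gen D \<Longrightarrow> (\<lambda>f. a f + b f) \<in> lie_gen D"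
  | smult: "a \<in> lie_gen D \<Longrightarrow> (\<lambda>f. const c * a f) \<in> lie_gen D"
  | bracket: "a \<in> lie_gen D \<Longrightarrow> b \<in> lie_gen D \<Longrightarrow> lie_bracket a b \<in> lie_gen D"

definition fin_dim :: "(('n, 'k::comm_ring_1) mpoly \<Rightarrow> ('n, 'k) mpoly) set \<Rightarrow> bool" where
  "fin_dim S \<longleftrightarrow> (\<exists>B. finite B \<and>
      (\<forall>a\<in>S. \<exists>c. a = (\<lambda>f. \<Sum>b\<in>B. const (c b) * b f)))"

definition ip :: "('n::finite \<Rightarrow> 'k::comm_ring_1) \<Rightarrow> ('n \<Rightarrow> int) \<Rightarrow> 'k" where
  "ip \<beta> u = (\<Sum>l\<in>UNIV. \<beta> l * of_int (u l))"

definition proportional :: "('n \<Rightarrow> 'k::field) \<Rightarrow> ('n \<Rightarrow> 'k) \<Rightarrow> bool" where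
  "proportional a b \<longleftrightarrow> (\<exists>c. a = (\<lambda>l. c * b l))"

end

theory Submission
  imports Defs "HOL-Library.Function_Algebras" "HOL.Vector_Spaces"
begin


abbreviation lk where "lk \<equiv> Poly_Mapping.lookup"
abbreviation sg where "sg \<equiv> Poly_Mapping.single"

definition ipf :: "('n::finite \<Rightarrow> 'k::comm_semiring_1) \<Rightarrow> ('n \<Rightarrow> nat) \<Rightarrow> 'k" where
  "ipf v a = (\<Sum>l\<in>UNIV. v l * of_nat (a l))"

definition ipn :: "('n::finite \<Rightarrow> 'k::comm_semiring_1) \<Rightarrow> ('n \<Rightarrow>\<^sub>0 nat) \<Rightarrow> 'k" where
  "ipn v y = (\<Sum>l\<in>UNIV. v l * of_nat (lk y l))"

definition Ev :: "('n::finite \<Rightarrow> 'k::comm_semiring_1) \<Rightarrow> ('n, 'k) mpoly \<Rightarrow> ('n, 'k) mpoly" where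
  "Ev v f = Abs_poly_mapping (\<lambda>y. ipn v y * lk f y)"

lemma lookup_Ev: "lk (Ev v f) y = ipn v y * lk f y"
proof -
  have "finite {y. ipn v y * lk f y \<noteq> 0}"
    by (rule finite_subset[of _ "Poly_Mapping.keys f"]) (auto simp: in_keys_iff)
  then show ?thesis unfolding Ev_def by simp
qed

lemma lookup_single_mult:
  fixes s :: "'n \<Rightarrow>\<^sub>0 nat" and g :: "('n \<Rightarrow>\<^sub>0 nat) \<Rightarrow>\<^sub>0 'k::comm_semiring_1"
  shows "lk (sg s c * g) x = (if (\<exists>y. x = s + y) then c * lk g (x - s) else 0)"
proof -
  have "lk (sg s c * g) x = (\<Sum>l. lk (sg s c) l * (\<Sum>q. lk g q when x = l + q))"
    by (rule lookup_mult)
  also have "\<dots> = (\<Sum>l. (c * (\<Sum>q. lk g q when x = l + q)) when s = l)"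
    by (intro Sum_any.cong) (simp add: lookup_single when_def)
  also have "\<dots> = c * (\<Sum>q. lk g q when x = s + q)"
    by simp
  also have "\<dots> = (if (\<exists>y. x = s + y) then c * lk g (x - s) else 0)"
  proof (cases "\<exists>y. x = s + y")
    case True
    then obtain y where y: "x = s + y" by blast
    have "(\<Sum>q. lk g q when x = s + q) = (\<Sum>q. lk g q when q = y)"
      by (intro Sum_any.cong) (auto simp: y when_def)
    then show ?thesis using True y by simp
  next
    case False
    then have "(\<Sum>q. lk g q when x = s + q) = 0"
      by (simp add: when_def)
    then show ?thesis using False by simp
  qed
  finally show ?thesis .
qed

lemma lookup_const_mult: "lk (const c * g) x = c * lk g x"
  unfolding const_def by (subst lookup_single_mult) simp

definition AP :: "('n::finite \<Rightarrow> nat) \<Rightarrow> ('n \<Rightarrow>\<^sub>0 nat)" where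
  "AP a = Abs_poly_mapping a"

lemma lk_AP [simp]: "lk (AP a) = a"
  unfolding AP_def by simp

lemma AP_add: "AP (\<lambda>l. a l + b l) = AP a + AP b"
  by (rule poly_mapping_eqI) (simp add: lookup_add)

lemma var_power: "(var j :: ('n, 'k::comm_semiring_1) mpoly) ^ e = sg (sg j e) 1"
proof (induction e)
  case 0
  then show ?case by simp
next
  case (Suc e)
  have "sg j 1 + sg j e = sg j (Suc e)"
    by (simp add: single_add[symmetric])
  then show ?case using Suc by (simp add: var_def mult_single)
qed

lemma prod_single:
  assumes "finite S"
  shows "(\<Prod>j\<in>S. sg (g j) (1::'k::comm_semiring_1)) = sg (\<Sum>j\<in>S. (g j :: 'a::comm_monoid_add)) 1"
  using assms
proof (induction S rule: finite_induct)
  case empty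
  then show ?case by simp
next
  case (insert x F)
  then show ?case by (simp add: mult_single)
qed

lemma prod_var_AP: "(\<Prod>j\<in>UNIV. (var j :: ('n::finite, 'k::comm_semiring_1) mpoly) ^ a j) = sg (AP a) 1"
proof -
  have "(\<Prod>j\<in>UNIV. (var j :: ('n, 'k) mpoly) ^ a j) = (\<Prod>j\<in>UNIV. sg (sg j (a j)) 1)"
    by (simp add: var_power)
  also have "\<dots> = sg (\<Sum>j\<in>UNIV. sg j (a j)) 1"
    by (rule prod_single) simp
  also have "(\<Sum>j\<in>UNIV. sg j (a j)) = AP a"
  proof (rule poly_mapping_eqI)
    fix l
    have "lk (\<Sum>j\<in>UNIV. sg j (a j)) l = (\<Sum>j\<in>UNIV. (a j when j = l))"
      by (simp add: lookup_sum lookup_single)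
    also have "\<dots> = a l"
      by (simp add: when_def)
    finally show "lk (\<Sum>j\<in>UNIV. sg j (a j)) l = lk (AP a) l" by simp
  qed
  finally show ?thesis .
qed

lemma lookup_pd:
  "lk (pd j f) y = of_nat (lk y j + 1) * lk f (y + sg j 1)"
proof -
  let ?e = "sg j (1::nat)"
  let ?c = "\<lambda>m. (of_nat (lk m j) * lk f m)"
  have "lk (pd j f) y = (\<Sum>m\<in>Poly_Mapping.keys f. (?c m when m - ?e = y))"
    unfolding pd_def by (simp add: lookup_sum lookup_single)
  also have "\<dots> = (\<Sum>m\<in>Poly_Mapping.keys f. (if m = y + ?e then ?c m else 0))"
  proof (rule sum.cong)
    fix m assume "m \<in> Poly_Mapping.keys f"
    show "(?c m when m - ?e = y) = (if m = y + ?e then ?c m else 0)"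
    proof (cases "lk m j = 0")
      case True
      have "m \<noteq> y + ?e"
      proof
        assume "m = y + ?e"
        then have "lk m j = lk y j + 1" by (simp add: lookup_add)
        with True show False by simp
      qed
      then show ?thesis using True by (simp add: when_def)
    next
      case False
      have "m - ?e = y \<longleftrightarrow> m = y + ?e"
      proof
        assume "m - ?e = y"
        then have "\<forall>l. lk y l = lk m l - lk ?e l" by (auto simp: lookup_minus)
        then show "m = y + ?e"
          using False by (intro poly_mapping_eqI) (auto simp: lookup_add lookup_single when_def)
      next
        assume "m = y + ?e"
        then show "m - ?e = y" by (intro poly_mapping_eqI) (simp add: lookup_minus lookup_add)
      qed
      then show ?thesis by (simp add: when_def)
    qed
  qed simp
  also have "\<dots> = (if y + ?e \<in> Poly_Mapping.keys f then ?c (y + ?e) else 0)"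
    by (simp add: sum.delta')
  also have "\<dots> = ?c (y + ?e)"
    by (auto simp: in_keys_iff)
  also have "\<dots> = of_nat (lk y j + 1) * lk f (y + ?e)"
    by (simp add: lookup_add)
  finally show ?thesis .
qed

lemma lookup_var_pd:
  "lk (var j * pd j f) x = of_nat (lk x j) * lk f x"
proof -
  let ?e = "sg j (1::nat)"
  show ?thesis
  proof (cases "lk x j = 0")
    case True
    have "\<not> (\<exists>y. x = ?e + y)"
    proof
      assume "\<exists>y. x = ?e + y"
      then obtain y where "x = ?e + y" by blast
      then have "lk x j = 1 + lk y j" by (simp add: lookup_add)
      with True show False by simp
    qed
    then show ?thesis unfolding var_def using True by (subst lookup_single_mult) simp
  next
    case False
    have x: "x = ?e + (x - ?e)"
      using False by (intro poly_mapping_eqI) (auto simp: lookup_add lookup_minus lookup_single when_def)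
    have "lk (x - ?e) j + 1 = lk x j"
      using False by (simp add: lookup_minus)
    moreover have "x - ?e + ?e = x" using x by (simp add: add.commute)
    moreover have ex: "\<exists>y. x = ?e + y" using x by blast
    ultimately show ?thesis unfolding var_def
      by (subst lookup_single_mult) (simp add: lookup_pd)
  qed
qed

lemma ipn_AP [simp]: "ipn v (AP a) = ipf v a"
  by (simp add: ipn_def ipf_def)

lemma ipn_add: "ipn v (x + y) = ipn v x + ipn v y"
  by (simp add: ipn_def lookup_add distrib_left sum.distrib)

lemma Delta_eq: "Delta a v f = sg (AP a) 1 * Ev v f"
proof -
  have "(\<Sum>j\<in>UNIV. const (v j) * (var j * pd j f)) = Ev v f"
  proof (rule poly_mapping_eqI)
    fix x
    have "lk (\<Sum>j\<in>UNIV. const (v j) * (var j * pd j f)) x = (\<Sum>j\<in>UNIV. v j * (of_nat (lk x j) * lk f x))"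
      by (simp add: lookup_sum lookup_const_mult lookup_var_pd)
    also have "\<dots> = ipn v x * lk f x"
      by (simp add: ipn_def sum_distrib_right mult.assoc)
    finally show "lk (\<Sum>j\<in>UNIV. const (v j) * (var j * pd j f)) x = lk (Ev v f) x"
      by (simp add: lookup_Ev)
  qed
  then show ?thesis unfolding Delta_def by (simp add: prod_var_AP)
qed



lemma Ev_single_mult:
  "Ev v (sg B 1 * g) = sg B 1 * (Ev v g + const (ipn v B) * g)"
proof (rule poly_mapping_eqI)
  fix x
  show "lk (Ev v (sg B 1 * g)) x = lk (sg B 1 * (Ev v g + const (ipn v B) * g)) x"
  proof (cases "\<exists>y. x = B + y")
    case True
    then obtain y where y: "x = B + y" by blast
    have "x - B = y" using y by simp
    then show ?thesis using True y
      by (simp add: lookup_Ev lookup_single_mult lookup_add lookup_const_mult ipn_add distrib_right add.commute)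
  next
    case False
    then show ?thesis by (simp add: lookup_Ev lookup_single_mult)
  qed
qed

lemma Ev_comm: "Ev v (Ev w f) = Ev w (Ev v f)"
  by (rule poly_mapping_eqI) (simp add: lookup_Ev algebra_simps)

lemma Ev_add: "Ev v (f + g) = Ev v f + Ev v g"
  by (rule poly_mapping_eqI) (simp add: lookup_Ev lookup_add algebra_simps)

lemma Ev_const: "Ev v (const c * f) = const c * Ev v f"
  by (rule poly_mapping_eqI) (simp add: lookup_Ev lookup_const_mult mult.left_commute)

lemma Ev_lin:
  fixes v w :: "'n::finite \<Rightarrow> 'k::comm_ring_1"
  shows "Ev (\<lambda>l. c * v l - d * w l) f = const c * Ev v f - const d * Ev w f"
proof (rule poly_mapping_eqI)
  fix x
  have "ipn (\<lambda>l. c * v l - d * w l) x = c * ipn v x - d * ipn w x"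
    by (simp add: ipn_def sum_subtractf sum_distrib_left algebra_simps)
  then show "lk (Ev (\<lambda>l. c * v l - d * w l) f) x = lk (const c * Ev v f - const d * Ev w f) x"
    by (simp add: lookup_Ev lookup_minus lookup_const_mult left_diff_distrib mult.assoc)
qed

lemma Ev_smult:
  fixes v :: "'n::finite \<Rightarrow> 'k::comm_ring_1"
  shows "Ev (\<lambda>l. c * v l) f = const c * Ev v f"
  by (rule poly_mapping_eqI) (simp add: lookup_Ev lookup_const_mult ipn_def sum_distrib_left algebra_simps)

lemma Ev_zero: "Ev (\<lambda>l. 0) f = 0"
  by (rule poly_mapping_eqI) (simp add: lookup_Ev ipn_def)

lemma Delta_bracket:
  fixes v w :: "'n::finite \<Rightarrow> 'k::comm_ring_1"
  shows "lie_bracket (Delta a v) (Delta b w) = Delta (\<lambda>l. a l + b l) (\<lambda>l. ipf v b * w l - ipf w a * v l)"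
proof
  fix f
  have 1: "Delta a v (Delta b w f) = sg (AP a + AP b) 1 * (Ev v (Ev w f) + const (ipf v b) * Ev w f)"
    by (simp add: Delta_eq Ev_single_mult mult_single mult.assoc[symmetric])
  have 2: "Delta b w (Delta a v f) = sg (AP a + AP b) 1 * (Ev v (Ev w f) + const (ipf w a) * Ev v f)"
    by (simp add: Delta_eq Ev_single_mult mult_single mult.assoc[symmetric] Ev_comm add.commute)
  show "lie_bracket (Delta a v) (Delta b w) f = Delta (\<lambda>l. a l + b l) (\<lambda>l. ipf v b * w l - ipf w a * v l) f"
    unfolding lie_bracket_def 1 2
    by (simp add: Delta_eq AP_add Ev_lin right_diff_distrib distrib_left)
qed

lemma Delta_add: "Delta a v (f + g) = Delta a v f + Delta a v g"
  by (simp add: Delta_eq Ev_add distrib_left)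

lemma Delta_const: "Delta a v (const c * f) = const c * Delta a v f"
  by (simp add: Delta_eq Ev_const mult.left_commute)

lemma Delta_smult:
  fixes v :: "'n::finite \<Rightarrow> 'k::comm_ring_1"
  shows "Delta a (\<lambda>l. c * v l) f = const c * Delta a v f"
  by (simp add: Delta_eq Ev_smult mult.left_commute)

lemma Delta_zero_vec: "Delta a (\<lambda>l. 0) f = 0"
  by (simp add: Delta_eq Ev_zero)



definition inspan :: "(('n, 'k::comm_ring_1) mpoly \<Rightarrow> ('n, 'k) mpoly) set \<Rightarrow> (('n, 'k) mpoly \<Rightarrow> ('n, 'k) mpoly) \<Rightarrow> bool" where
  "inspan B F \<longleftrightarrow> (\<exists>c. F = (\<lambda>f. \<Sum>b\<in>B. const (c b) * b f))"

definition linop :: "(('n, 'k::comm_ring_1) mpoly \<Rightarrow> ('n, 'k) mpoly) \<Rightarrow> bool" where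
  "linop F \<longleftrightarrow> (\<forall>f g. F (f + g) = F f + F g) \<and> (\<forall>c f. F (const c * f) = const c * F f)"

lemma const_1 [simp]: "const 1 = 1"
  by (simp add: const_def)

lemma const_0 [simp]: "const 0 = 0"
  by (simp add: const_def)

lemma const_add: "const (a + b) = const a + const b"
  by (simp add: const_def single_add)

lemma const_mult: "const (a * b) = const a * const b"
  by (simp add: const_def mult_single)

lemma inspan_base:
  assumes "finite B" "b \<in> B"
  shows "inspan B b"
  unfolding inspan_def
proof (intro exI[of _ "\<lambda>x. if x = b then 1 else 0"] ext)
  fix f
  have "(\<Sum>x\<in>B. const (if x = b then 1 else 0) * x f) = (\<Sum>x\<in>B. if x = b then b f else 0)"
    by (rule sum.cong) auto
  also have "\<dots> = b f" using assms by (simp add: sum.delta')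
  finally show "b f = (\<Sum>x\<in>B. const (if x = b then 1 else 0) * x f)" by simp
qed

lemma inspan_zero: "inspan B (\<lambda>f. 0)"
  unfolding inspan_def by (intro exI[of _ "\<lambda>x. 0"]) simp

lemma inspan_add:
  assumes "inspan B F" "inspan B G"
  shows "inspan B (\<lambda>f. F f + G f)"
proof -
  obtain c where c: "F = (\<lambda>f. \<Sum>b\<in>B. const (c b) * b f)" using assms(1) by (auto simp: inspan_def)
  obtain d where d: "G = (\<lambda>f. \<Sum>b\<in>B. const (d b) * b f)" using assms(2) by (auto simp: inspan_def)
  show ?thesis unfolding inspan_def c d
    by (intro exI[of _ "\<lambda>b. c b + d b"]) (simp add: const_add distrib_right sum.distrib)
qed

lemma inspan_smult:
  assumes "inspan B F"
  shows "inspan B (\<lambda>f. const a * F f)"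
proof -
  obtain c where c: "F = (\<lambda>f. \<Sum>b\<in>B. const (c b) * b f)" using assms(1) by (auto simp: inspan_def)
  show ?thesis unfolding inspan_def c
    by (intro exI[of _ "\<lambda>b. a * c b"]) (simp add: const_mult sum_distrib_left mult.assoc)
qed

lemma inspan_sum:
  assumes "finite I" "\<And>i. i \<in> I \<Longrightarrow> inspan B (H i)"
  shows "inspan B (\<lambda>f. \<Sum>i\<in>I. H i f)"
  using assms
proof (induction I rule: finite_induct)
  case empty
  then show ?case by (simp add: inspan_zero)
next
  case (insert x F)
  then show ?case by (simp add: inspan_add)
qed

lemma linop_0:
  assumes "linop F" shows "F 0 = 0"
proof -
  have "F (0 + 0) = F 0 + F 0" using assms unfolding linop_def by blast
  then show ?thesis by simp
qed

lemma linop_sum: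
  assumes "linop F" "finite I"
  shows "F (\<Sum>i\<in>I. g i) = (\<Sum>i\<in>I. F (g i))"
  using assms(2)
proof (induction I rule: finite_induct)
  case empty
  then show ?case using linop_0[OF assms(1)] by simp
next
  case (insert x I)
  then show ?case using assms(1) by (simp add: linop_def)
qed

lemma linop_diff:
  fixes F :: "('n, 'k::comm_ring_1) mpoly \<Rightarrow> ('n, 'k) mpoly"
  assumes "linop F"
  shows "F (f - g) = F f - F g"
proof -
  have "F (f - g + g) = F (f - g) + F g" using assms unfolding linop_def by blast
  then show ?thesis by simp
qed

lemma inspan_bracket:
  assumes fin: "finite B" and lin: "\<And>b. b \<in> B \<Longrightarrow> linop b"
    and br: "\<And>b b'. b \<in> B \<Longrightarrow> b' \<in> B \<Longrightarrow> inspan B (lie_bracket b b')"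
    and F: "inspan B F" and G: "inspan B G"
  shows "inspan B (lie_bracket F G)"
proof -
  obtain c where c: "F = (\<lambda>f. \<Sum>b\<in>B. const (c b) * b f)" using F by (auto simp: inspan_def)
  obtain d where d: "G = (\<lambda>f. \<Sum>b\<in>B. const (d b) * b f)" using G by (auto simp: inspan_def)
  have eq: "lie_bracket F G = (\<lambda>f. \<Sum>b\<in>B. \<Sum>b'\<in>B. const (c b * d b') * lie_bracket b b' f)"
  proof
    fix f
    have 1: "F (G f) = (\<Sum>b\<in>B. \<Sum>b'\<in>B. const (c b * d b') * b (b' f))"
      unfolding c d using lin fin
      by (simp add: linop_sum linop_def sum_distrib_left const_mult mult.assoc)
    have 2: "G (F f) = (\<Sum>b\<in>B. \<Sum>b'\<in>B. const (c b * d b') * b' (b f))"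
      unfolding c d using lin fin
      by (subst sum.swap) (simp add: linop_sum linop_def sum_distrib_left const_mult mult.assoc mult.left_commute)
    show "lie_bracket F G f = (\<Sum>b\<in>B. \<Sum>b'\<in>B. const (c b * d b') * lie_bracket b b' f)"
      unfolding lie_bracket_def 1 2
      by (simp add: sum_subtractf right_diff_distrib)
  qed
  have "inspan B (\<lambda>f. \<Sum>b\<in>B. \<Sum>b'\<in>B. const (c b * d b') * lie_bracket b b' f)"
    using fin br by (intro inspan_sum inspan_smult) auto
  then show ?thesis using eq by simp
qed

lemma lie_gen_inspan:
  assumes fin: "finite B" and lin: "\<And>b. b \<in> B \<Longrightarrow> linop b"
    and br: "\<And>b b'. b \<in> B \<Longrightarrow> b' \<in> B \<Longrightarrow> inspan B (lie_bracket b b')"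
    and D: "\<And>d. d \<in> D \<Longrightarrow> inspan B d"
    and x: "x \<in> lie_gen D"
  shows "inspan B x"
  using x
proof (induction rule: lie_gen.induct)
  case (base d)
  then show ?case by (rule D)
next
  case zero
  then show ?case by (rule inspan_zero)
next
  case (add a b)
  then show ?case by (blast intro: inspan_add)
next
  case (smult a c)
  then show ?case by (blast intro: inspan_smult)
next
  case (bracket a b)
  then show ?case using inspan_bracket[OF fin lin br] by blast
qed

lemma fin_dim_I:
  assumes fin: "finite B" and lin: "\<And>b. b \<in> B \<Longrightarrow> linop b"
    and br: "\<And>b b'. b \<in> B \<Longrightarrow> b' \<in> B \<Longrightarrow> inspan B (lie_bracket b b')"
    and D: "\<And>d. d \<in> D \<Longrightarrow> inspan B d"
  shows "fin_dim (lie_gen D)"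
  unfolding fin_dim_def
  using lie_gen_inspan[OF fin lin br D] fin unfolding inspan_def by blast

lemma linop_Delta: "linop (Delta a v)"
  by (simp add: linop_def Delta_add Delta_const)



lemma prop_refl: "proportional a (a :: 'n \<Rightarrow> 'k::field)"
  unfolding proportional_def by (intro exI[of _ 1]) simp

lemma prop_coeff:
  assumes "proportional a b" "a \<noteq> (\<lambda>_. 0)"
  obtains c where "c \<noteq> 0" "a = (\<lambda>l. c * b l)"
proof -
  obtain c where c: "a = (\<lambda>l. c * b l)" using assms(1) unfolding proportional_def by blast
  have "c \<noteq> 0" using c assms(2) by auto
  then show ?thesis using c that by blast
qed

lemma prop_sym:
  fixes a b :: "'n \<Rightarrow> 'k::field"
  assumes "proportional a b" "a \<noteq> (\<lambda>_. 0)"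
  shows "proportional b a"
proof -
  obtain c where c: "c \<noteq> 0" "a = (\<lambda>l. c * b l)" using prop_coeff[OF assms] by blast
  have "b = (\<lambda>l. inverse c * a l)" using c by (simp add: fun_eq_iff)
  then show ?thesis unfolding proportional_def by blast
qed

lemma prop_trans:
  fixes a b d :: "'n \<Rightarrow> 'k::field"
  assumes "proportional a b" "proportional b d"
  shows "proportional a d"
proof -
  obtain c where c: "a = (\<lambda>l. c * b l)" using assms(1) unfolding proportional_def by blast
  obtain e where e: "b = (\<lambda>l. e * d l)" using assms(2) unfolding proportional_def by blast
  have "a = (\<lambda>l. (c * e) * d l)" using c e by (simp add: fun_eq_iff mult.assoc)
  then show ?thesis unfolding proportional_def by blast
qed

lemma ipf_smult: "ipf (\<lambda>l. c * v l) a = c * ipf v a"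
  by (simp add: ipf_def sum_distrib_left mult.assoc)

lemma ipf_lin:
  fixes v w :: "'n::finite \<Rightarrow> 'k::comm_ring_1"
  shows "ipf (\<lambda>l. c * v l - d * w l) a = c * ipf v a - d * ipf w a"
  by (simp add: ipf_def sum_distrib_left sum_subtractf left_diff_distrib mult.assoc)

lemma ipf_add2: "ipf v (\<lambda>l. a l + b l) = ipf v a + ipf v b"
  by (simp add: ipf_def distrib_left sum.distrib)

lemma Delta_zero_fun: "Delta a (\<lambda>l. 0) = (\<lambda>f. 0)"
  by (rule ext) (rule Delta_zero_vec)

locale good =
  fixes k :: nat and p :: "nat \<Rightarrow> 'n::finite \<Rightarrow> nat" and \<beta> :: "nat \<Rightarrow> 'n \<Rightarrow> 'k::field_char_0"
  assumes bnz: "\<And>i. i < k \<Longrightarrow> \<beta> i \<noteq> (\<lambda>_. 0)"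
    and C1: "\<And>i j. i < k \<Longrightarrow> j < k \<Longrightarrow> proportional (\<beta> i) (\<beta> j) \<Longrightarrow> ipf (\<beta> i) (p i) = ipf (\<beta> i) (p j)"
    and C2a: "\<And>i j. i < k \<Longrightarrow> j < k \<Longrightarrow> \<not> proportional (\<beta> i) (\<beta> j) \<Longrightarrow> i < j \<Longrightarrow> ipf (\<beta> j) (p i) = 0"
    and C2b: "\<And>i j. i < k \<Longrightarrow> j < k \<Longrightarrow> \<not> proportional (\<beta> i) (\<beta> j) \<Longrightarrow> i < j \<Longrightarrow>
               \<exists>r. ipf (\<beta> i) (p j) + of_nat r * ipf (\<beta> i) (p i) = 0"
begin

definition sim where "sim i j \<longleftrightarrow> proportional (\<beta> i) (\<beta> j)"
definition Lx where "Lx i = Max {j. j < k \<and> sim i j}"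
definition w where "w i = ipf (\<beta> i) (p i)"
definition R where "R c i = (if w c = 0 then 0 else (SOME r. ipf (\<beta> c) (p i) + of_nat r * w c = 0))"
definition deg :: "(nat \<Rightarrow> nat) \<Rightarrow> 'n \<Rightarrow> nat" where "deg m = (\<lambda>l. \<Sum>i<k. m i * p i l)"
definition E where "E c i = (if sim i c then 1 else if Lx c < i then - int (R c i) else 0)"
definition phi where "phi c m = (\<Sum>i<k. int (m i) * E c i)"
definition Inv where "Inv m j \<longleftrightarrow> (\<forall>i. k \<le> i \<longrightarrow> m i = 0) \<and> (\<forall>i<k. m i \<noteq> 0 \<longrightarrow> Lx i \<le> Lx j) \<and>
   (\<Sum>i\<in>{i. i < k \<and> sim i j}. m i) = 1 \<and> (\<forall>c<k. Lx c < Lx j \<longrightarrow> phi c m \<le> 0)"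

lemma sim_refl: "sim i i"
  by (simp add: sim_def prop_refl)

lemma sim_sym: "i < k \<Longrightarrow> sim i j \<Longrightarrow> sim j i"
  unfolding sim_def using prop_sym bnz by blast

lemma sim_trans: "sim i j \<Longrightarrow> sim j l \<Longrightarrow> sim i l"
  unfolding sim_def using prop_trans by blast

lemma sim_coeff:
  assumes "i < k" "sim i j"
  obtains c where "c \<noteq> 0" "\<beta> i = (\<lambda>l. c * \<beta> j l)"
  using prop_coeff[of "\<beta> i" "\<beta> j"] assms bnz unfolding sim_def by blast

lemma Lx_props:
  assumes "i < k"
  shows "i \<le> Lx i" "Lx i < k" "sim i (Lx i)"
proof -
  let ?S = "{j. j < k \<and> sim i j}"
  have fin: "finite ?S" by simp
  have iS: "i \<in> ?S" using assms sim_refl by simp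
  show "i \<le> Lx i" unfolding Lx_def using fin iS by (rule Max_ge)
  have "Lx i \<in> ?S" unfolding Lx_def using fin iS by (intro Max_in) auto
  then show "Lx i < k" "sim i (Lx i)" by auto
qed

lemma Lx_eq:
  assumes "i < k" "j < k" "sim i j"
  shows "Lx i = Lx j"
proof -
  have "{l. l < k \<and> sim i l} = {l. l < k \<and> sim j l}"
    using assms sim_sym sim_trans by blast
  then show ?thesis unfolding Lx_def by simp
qed

lemma Lx_eq_sim:
  assumes "i < k" "j < k" "Lx i = Lx j"
  shows "sim i j"
proof -
  have a: "sim i (Lx j)" using Lx_props(3)[of i] assms by simp
  have "sim (Lx j) j" using sim_sym[of j "Lx j"] Lx_props[of j] assms by simp
  then show ?thesis using a sim_trans by blast
qed

lemma sim_iff_Lx: "i < k \<Longrightarrow> j < k \<Longrightarrow> sim i j \<longleftrightarrow> Lx i = Lx j"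
  using Lx_eq Lx_eq_sim by blast

lemma K2:
  assumes "i < k" "c < k" "sim i c"
  shows "ipf (\<beta> c) (p i) = w c"
  using C1[of c i] assms sim_sym unfolding w_def sim_def by metis

lemma K3:
  assumes "i < k" "c < k" "\<not> sim i c" "i < Lx c"
  shows "ipf (\<beta> c) (p i) = 0"
proof -
  have L: "Lx c < k" "sim c (Lx c)" using Lx_props assms by auto
  have "\<not> sim i (Lx c)"
  proof
    assume "sim i (Lx c)"
    moreover have "sim (Lx c) c" using sim_sym[of c "Lx c"] L assms by simp
    ultimately have "sim i c" using sim_trans by blast
    with assms show False by simp
  qed
  then have z: "ipf (\<beta> (Lx c)) (p i) = 0"
    using C2a[of i "Lx c"] assms L unfolding sim_def by blast
  obtain \<mu> where "\<mu> \<noteq> 0" "\<beta> c = (\<lambda>l. \<mu> * \<beta> (Lx c) l)" using sim_coeff[of c "Lx c"] assms L by blast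
  then show ?thesis using z by (simp add: ipf_smult)
qed

lemma K1:
  assumes "i < k" "c < k" "Lx c < i"
  shows "ipf (\<beta> c) (p i) = - of_nat (R c i) * w c"
proof -
  have L: "Lx c < k" "sim c (Lx c)" "c \<le> Lx c" using Lx_props assms by auto
  have ns: "\<not> sim (Lx c) i"
  proof
    assume "sim (Lx c) i"
    then have "Lx (Lx c) = Lx i" using Lx_eq L assms by blast
    moreover have "Lx (Lx c) = Lx c" using Lx_eq[of c "Lx c"] L assms by simp
    moreover have "i \<le> Lx i" using Lx_props assms by simp
    ultimately show False using assms by simp
  qed
  obtain r where r: "ipf (\<beta> (Lx c)) (p i) + of_nat r * ipf (\<beta> (Lx c)) (p (Lx c)) = 0"
    using C2b[of "Lx c" i] ns L assms unfolding sim_def by blast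
  have sl: "sim (Lx c) c" using sim_sym[of c "Lx c"] L assms by simp
  obtain \<mu> where mu: "\<mu> \<noteq> 0" "\<beta> (Lx c) = (\<lambda>l. \<mu> * \<beta> c l)"
    using sim_coeff[OF L(1) sl] by blast
  have "ipf (\<beta> c) (p (Lx c)) = w c" using K2[of "Lx c" c] L sl assms by blast
  then have "\<mu> * (ipf (\<beta> c) (p i) + of_nat r * w c) = 0"
    using r mu by (simp add: ipf_smult algebra_simps)
  then have ex: "ipf (\<beta> c) (p i) + of_nat r * w c = 0" using mu by simp
  show ?thesis
  proof (cases "w c = 0")
    case True
    then show ?thesis using ex by (simp add: R_def)
  next
    case False
    then have "ipf (\<beta> c) (p i) + of_nat (R c i) * w c = 0"
      unfolding R_def using someI[of "\<lambda>r. ipf (\<beta> c) (p i) + of_nat r * w c = 0", OF ex] by simp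
    then show ?thesis by (simp add: algebra_simps eq_neg_iff_add_eq_0)
  qed
qed

lemma Kall:
  assumes "i < k" "c < k"
  shows "ipf (\<beta> c) (p i) = w c * of_int (E c i)"
proof (cases "sim i c")
  case True
  then show ?thesis using K2 assms by (simp add: E_def)
next
  case False
  show ?thesis
  proof (cases "Lx c < i")
    case True
    then show ?thesis using K1 assms False by (simp add: E_def)
  next
    case F2: False
    have "i \<noteq> Lx c"
    proof
      assume "i = Lx c"
      then have "sim i c" using Lx_props[of c] assms sim_sym by metis
      with False show False by simp
    qed
    then have "i < Lx c" using F2 by simp
    then show ?thesis using K3 assms False F2 by (simp add: E_def)
  qed
qed

lemma ipf_deg: "ipf v (deg m) = (\<Sum>i<k. of_nat (m i) * ipf v (p i))"
  unfolding ipf_def deg_def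
  by (simp add: sum_distrib_left sum_distrib_right mult_ac) (rule sum.swap)

lemma K4:
  assumes "c < k"
  shows "ipf (\<beta> c) (deg m) = w c * of_int (phi c m)"
proof -
  have "ipf (\<beta> c) (deg m) = (\<Sum>i<k. of_nat (m i) * (w c * of_int (E c i)))"
    unfolding ipf_deg using Kall assms by (intro sum.cong) auto
  also have "\<dots> = w c * of_int (phi c m)"
    unfolding phi_def by (simp add: sum_distrib_left mult_ac)
  finally show ?thesis .
qed

end



context good begin

lemma phi_add: "phi c (\<lambda>i. m i + m' i) = phi c m + phi c m'"
  unfolding phi_def by (simp add: distrib_right sum.distrib)

lemma R_sim:
  assumes "c < k" "j < k" "sim c j" "i < k" "Lx c < i"
  shows "R c i = R j i"
proof -
  have Lcj: "Lx c = Lx j" using Lx_eq assms by blast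
  obtain \<mu> where mu: "\<mu> \<noteq> 0" "\<beta> c = (\<lambda>l. \<mu> * \<beta> j l)" using sim_coeff assms by blast
  have wc: "w c = \<mu> * w j"
  proof -
    have "w c = \<mu> * ipf (\<beta> j) (p c)" unfolding w_def using mu by (simp add: ipf_smult)
    also have "ipf (\<beta> j) (p c) = w j" using K2 assms by blast
    finally show ?thesis .
  qed
  have 1: "ipf (\<beta> c) (p i) = - of_nat (R c i) * w c" using K1 assms by blast
  have 2: "ipf (\<beta> j) (p i) = - of_nat (R j i) * w j" using K1 assms Lcj by simp
  have "ipf (\<beta> c) (p i) = \<mu> * ipf (\<beta> j) (p i)" using mu by (simp add: ipf_smult)
  then have "\<mu> * (of_nat (R c i) * w j) = \<mu> * (of_nat (R j i) * w j)"
    using 1 2 wc by (simp add: algebra_simps)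
  then have eq: "of_nat (R c i) * w j = of_nat (R j i) * w j" using mu by simp
  show ?thesis
  proof (cases "w j = 0")
    case True
    then have "w c = 0" using wc by simp
    then show ?thesis using True by (simp add: R_def)
  next
    case False
    then show ?thesis using eq by simp
  qed
qed

lemma phi_sim:
  assumes "c < k" "j < k" "sim c j"
  shows "phi c m = phi j m"
proof -
  have "\<And>i. i < k \<Longrightarrow> E c i = E j i"
  proof -
    fix i assume i: "i < k"
    have "sim i c \<longleftrightarrow> sim i j" using assms sim_sym sim_trans i by blast
    moreover have "Lx c = Lx j" using Lx_eq assms by blast
    ultimately show "E c i = E j i" unfolding E_def using R_sim[OF assms i] by simp
  qed
  then show ?thesis unfolding phi_def by (intro sum.cong) auto
qed

lemma phi_own:
  assumes inv: "Inv m j" and j: "j < k" and c: "c < k" and s: "sim c j"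
  shows "phi c m = 1"
proof -
  have Lcj: "Lx c = Lx j" using Lx_eq c j s by blast
  have "phi c m = (\<Sum>i<k. if sim i j then int (m i) else 0)"
    unfolding phi_def
  proof (rule sum.cong)
    fix i assume "i \<in> {..<k}"
    then have i: "i < k" by simp
    have sij: "sim i c \<longleftrightarrow> sim i j" using c j s sim_sym sim_trans i by blast
    show "int (m i) * E c i = (if sim i j then int (m i) else 0)"
    proof (cases "sim i c")
      case True then show ?thesis using sij by (simp add: E_def)
    next
      case False
      show ?thesis
      proof (cases "Lx c < i")
        case True
        have "m i = 0"
        proof (rule ccontr)
          assume "m i \<noteq> 0"
          then have "Lx i \<le> Lx j" using inv i unfolding Inv_def by blast
          moreover have "i \<le> Lx i" using Lx_props i by simp
          ultimately show False using True Lcj by simp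
        qed
        then show ?thesis using False sij by simp
      next
        case F2: False then show ?thesis using False sij by (simp add: E_def)
      qed
    qed
  qed simp
  also have "\<dots> = int (\<Sum>i\<in>{i. i < k \<and> sim i j}. m i)"
  proof -
    have st: "{i. i < k \<and> sim i j} = {i \<in> {..<k}. sim i j}" by auto
    have "(\<Sum>i\<in>{i \<in> {..<k}. sim i j}. int (m i)) = (\<Sum>i<k. if sim i j then int (m i) else 0)"
      by (rule sum.inter_filter) simp
    then show ?thesis unfolding st by simp
  qed
  also have "\<dots> = 1" using inv unfolding Inv_def by simp
  finally show ?thesis .
qed

lemma phi_later:
  assumes inv: "Inv m j" and j: "j < k" and c: "c < k" and lt: "Lx j < Lx c"
  shows "phi c m = 0"
  unfolding phi_def
proof (rule sum.neutral, rule ballI)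
  fix i assume "i \<in> {..<k}"
  then have i: "i < k" by simp
  show "int (m i) * E c i = 0"
  proof (cases "m i = 0")
    case False
    then have Li: "Lx i \<le> Lx j" using inv i unfolding Inv_def by blast
    have "\<not> sim i c" using Li lt sim_iff_Lx i c by simp
    moreover have "\<not> Lx c < i" using Li lt Lx_props(1)[OF i] by linarith
    ultimately show ?thesis by (simp add: E_def)
  qed simp
qed

definition dl :: "nat \<Rightarrow> nat \<Rightarrow> nat" where "dl j = (\<lambda>i. if i = j then 1 else 0)"

lemma deg_dl:
  assumes "j < k" shows "deg (dl j) = p j"
proof
  fix l
  have "deg (dl j) l = (\<Sum>i<k. if i = j then p j l else 0)"
    unfolding deg_def dl_def by (rule sum.cong) auto
  then show "deg (dl j) l = p j l" using assms by (simp add: sum.delta)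
qed

lemma deg_add: "deg (\<lambda>i. m i + m' i) = (\<lambda>l. deg m l + deg m' l)"
  unfolding deg_def by (simp add: distrib_right sum.distrib)

lemma Inv_dl:
  assumes j: "j < k"
  shows "Inv (dl j) j"
  unfolding Inv_def
proof (intro conjI allI impI)
  fix i assume "k \<le> i" then show "dl j i = 0" using j by (simp add: dl_def)
next
  fix i assume "i < k" "dl j i \<noteq> 0" then show "Lx i \<le> Lx j" by (simp add: dl_def split: if_splits)
next
  have "(\<Sum>i\<in>{i. i < k \<and> sim i j}. dl j i) = (\<Sum>i\<in>{i. i < k \<and> sim i j}. if i = j then 1 else 0)"
    by (simp add: dl_def)
  also have "\<dots> = 1" using j sim_refl by (simp add: sum.delta)
  finally show "(\<Sum>i\<in>{i. i < k \<and> sim i j}. dl j i) = 1" .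
next
  fix c assume c: "c < k" "Lx c < Lx j"
  have "phi c (dl j) = (\<Sum>i<k. if i = j then E c j else 0)"
    unfolding phi_def dl_def by (intro sum.cong) auto
  also have "\<dots> = E c j" using j by (simp add: sum.delta)
  also have "\<not> sim j c" using sim_iff_Lx c j by simp
  then have "E c j \<le> 0" by (simp add: E_def)
  finally show "phi c (dl j) \<le> 0" .
qed

lemma Inv_cross:
  assumes j: "j < k" and j': "j' < k" and inv: "Inv m j" and inv': "Inv m' j'"
    and lt: "Lx j < Lx j'" and nz: "phi j m' \<noteq> 0"
  shows "Inv (\<lambda>i. m i + m' i) j'"
  unfolding Inv_def
proof (intro conjI allI impI)
  fix i assume "k \<le> i" then show "m i + m' i = 0" using inv inv' unfolding Inv_def by auto
next
  fix i assume i: "i < k" "m i + m' i \<noteq> 0"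
  then show "Lx i \<le> Lx j'" using inv inv' lt unfolding Inv_def
    by (metis add_eq_0_iff_both_eq_0 order.strict_implies_order order_trans)
next
  have "(\<Sum>i\<in>{i. i < k \<and> sim i j'}. m i) = 0"
  proof (rule sum.neutral, rule ballI)
    fix i assume "i \<in> {i. i < k \<and> sim i j'}"
    then have i: "i < k" "Lx i = Lx j'" using sim_iff_Lx j' by auto
    show "m i = 0"
    proof (rule ccontr)
      assume "m i \<noteq> 0"
      then have "Lx i \<le> Lx j" using inv i unfolding Inv_def by blast
      then show False using i lt by simp
    qed
  qed
  then show "(\<Sum>i\<in>{i. i < k \<and> sim i j'}. m i + m' i) = 1"
    using inv' unfolding Inv_def by (simp add: sum.distrib)
next
  fix c assume c: "c < k" "Lx c < Lx j'"
  have m'c: "phi c m' \<le> 0" using inv' c unfolding Inv_def by blast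
  consider "Lx c = Lx j" | "Lx c < Lx j" | "Lx j < Lx c" by linarith
  then show "phi c (\<lambda>i. m i + m' i) \<le> 0"
  proof cases
    case 1
    then have s: "sim c j" using sim_iff_Lx c j by simp
    have "phi c m = 1" using phi_own[OF inv j c(1) s] .
    moreover have "phi c m' = phi j m'" using phi_sim[OF c(1) j s] .
    moreover have "phi j m' \<le> 0" using inv' j lt unfolding Inv_def by blast
    ultimately show ?thesis using nz by (simp add: phi_add)
  next
    case 2
    then have "phi c m \<le> 0" using inv c unfolding Inv_def by blast
    then show ?thesis using m'c by (simp add: phi_add)
  next
    case 3
    then have "phi c m = 0" using phi_later[OF inv j c(1)] by simp
    then show ?thesis using m'c by (simp add: phi_add)
  qed
qed

end



context good begin

definition R0 where "R0 = (\<Sum>c<k. \<Sum>i<k. R c i)"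

lemma R_le_R0: "c < k \<Longrightarrow> i < k \<Longrightarrow> R c i \<le> R0"
proof -
  assume c: "c < k" and i: "i < k"
  have "R c i \<le> (\<Sum>i<k. R c i)" using i by (intro member_le_sum) auto
  also have "\<dots> \<le> R0" unfolding R0_def using c by (intro member_le_sum[of c "{..<k}" "\<lambda>c. \<Sum>i<k. R c i"]) auto
  finally show ?thesis .
qed

lemma m_step:
  assumes inv: "Inv m j" and j: "j < k" and h: "h < k"
  shows "m h \<le> 1 + R0 * (\<Sum>i\<in>{Suc h..<k}. m i)"
proof -
  consider "Lx h = Lx j" | "Lx j < Lx h" | "Lx h < Lx j" by linarith
  then show ?thesis
  proof cases
    case 1
    then have "sim h j" using sim_iff_Lx h j by simp
    then have "m h \<le> (\<Sum>i\<in>{i. i < k \<and> sim i j}. m i)" using h by (intro member_le_sum) auto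
    then show ?thesis using inv unfolding Inv_def by simp
  next
    case 2
    then have "m h = 0" using inv h unfolding Inv_def by (meson leD)
    then show ?thesis by simp
  next
    case 3
    have ph: "phi h m \<le> 0" using inv h 3 unfolding Inv_def by blast
    define S1 where "S1 = (\<Sum>i<k. if Lx h < i then R h i * m i else 0)"
    have "(\<Sum>i<k. (if i = h then int (m i) else 0) - (if Lx h < i then int (R h i * m i) else 0)) \<le> phi h m"
      unfolding phi_def
    proof (rule sum_mono)
      fix i assume "i \<in> {..<k}"
      show "(if i = h then int (m i) else 0) - (if Lx h < i then int (R h i * m i) else 0) \<le> int (m i) * E h i"
      proof (cases "i = h")
        case True
        have "\<not> Lx h < h" using Lx_props(1)[OF h] by simp
        then show ?thesis using True sim_refl by (simp add: E_def)
      next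
        case False
        have nn: "0 \<le> int (R h i * m i)" "0 \<le> int (m i)" by simp_all
        have lhs: "(if Lx h < i then - int (R h i * m i) else 0) \<le> 0" using nn(1) by simp
        have "int (m i) * E h i \<ge> (if Lx h < i then - int (R h i * m i) else 0)"
        proof (cases "sim i h")
          case True
          then have "E h i = 1" by (simp add: E_def)
          then have "int (m i) * E h i = int (m i)" by simp
          then show ?thesis using lhs nn(2) by linarith
        next
          case F: False
          show ?thesis
          proof (cases "Lx h < i")
            case True
            then have "E h i = - int (R h i)" using F by (simp add: E_def)
            then have "int (m i) * E h i = - int (R h i * m i)" by simp
            then show ?thesis using True by simp
          next
            case False
            then show ?thesis using F by (simp add: E_def)
          qed
        qed
        moreover have "(if i = h then int (m i) else 0) - (if Lx h < i then int (R h i * m i) else 0)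
            = (if Lx h < i then - int (R h i * m i) else 0)" using False by simp
        ultimately show ?thesis by linarith
      qed
    qed
    moreover have "(\<Sum>i<k. (if i = h then int (m i) else 0) - (if Lx h < i then int (R h i * m i) else 0))
        = int (m h) - int S1"
    proof -
      have a: "(\<Sum>i<k. (if i = h then int (m i) else 0)) = int (m h)" using h by (simp add: sum.delta)
      have b: "int S1 = (\<Sum>i<k. (if Lx h < i then int (R h i * m i) else 0))"
        unfolding S1_def of_nat_sum by (intro sum.cong) auto
      show ?thesis unfolding sum_subtractf a b ..
    qed
    ultimately have mh: "m h \<le> S1" using ph by linarith
    have "S1 \<le> (\<Sum>i<k. if Suc h \<le> i then R0 * m i else 0)"
      unfolding S1_def
    proof (rule sum_mono)
      fix i assume i: "i \<in> {..<k}"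
      show "(if Lx h < i then R h i * m i else 0) \<le> (if Suc h \<le> i then R0 * m i else 0)"
        using Lx_props(1)[OF h] R_le_R0[OF h] i by (auto intro: mult_le_mono1)
    qed
    also have "(\<Sum>i<k. if Suc h \<le> i then R0 * m i else 0) = (\<Sum>i\<in>{i \<in> {..<k}. Suc h \<le> i}. R0 * m i)"
      by (rule sum.inter_filter[symmetric]) simp
    also have "{i \<in> {..<k}. Suc h \<le> i} = {Suc h..<k}" by auto
    also have "(\<Sum>i\<in>{Suc h..<k}. R0 * m i) = R0 * (\<Sum>i\<in>{Suc h..<k}. m i)"
      by (simp add: sum_distrib_left)
    finally show ?thesis using mh by simp
  qed
qed

lemma T_bound:
  assumes inv: "Inv m j" and j: "j < k"
  shows "h \<le> k \<Longrightarrow> (\<Sum>i\<in>{h..<k}. m i) \<le> (R0 + 2) ^ (k - h)"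
proof (induction "k - h" arbitrary: h)
  case 0
  then show ?case by simp
next
  case (Suc d)
  then have h: "h < k" by simp
  have dd: "d = k - Suc h" using Suc.hyps(2) by simp
  have IH: "(\<Sum>i\<in>{Suc h..<k}. m i) \<le> (R0 + 2) ^ d"
    using Suc.hyps(1)[OF dd] h dd by simp
  have eq: "(\<Sum>i\<in>{h..<k}. m i) = m h + (\<Sum>i\<in>{Suc h..<k}. m i)"
    using h by (simp add: sum.atLeast_Suc_lessThan)
  define T where "T = (\<Sum>i\<in>{Suc h..<k}. m i)"
  have mh: "m h \<le> 1 + R0 * T" unfolding T_def by (rule m_step[OF inv j h])
  have m2: "(R0 + 1) * T \<le> (R0 + 1) * (R0 + 2) ^ d" using IH unfolding T_def by (rule mult_le_mono2)
  have o: "1 \<le> (R0 + 2) ^ d" by simp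
  have pe: "(R0 + 2) ^ (k - h) = (R0 + 1) * (R0 + 2) ^ d + (R0 + 2) ^ d"
    using Suc.hyps(2)[symmetric] by simp
  have "(\<Sum>i\<in>{h..<k}. m i) = m h + T" using eq T_def by simp
  also have "\<dots> \<le> 1 + (R0 + 1) * T" using mh by (simp add: algebra_simps)
  also have "\<dots> \<le> (R0 + 2) ^ (k - h)" using m2 o pe by linarith
  finally show ?case .
qed

lemma m_bound:
  assumes inv: "Inv m j" and j: "j < k"
  shows "m i \<le> (R0 + 2) ^ k"
proof (cases "i < k")
  case True
  have "m i \<le> (\<Sum>i\<in>{i..<k}. m i)" using True by (intro member_le_sum) auto
  also have "\<dots> \<le> (R0 + 2) ^ (k - i)" using T_bound[OF inv j] True by simp
  also have "\<dots> \<le> (R0 + 2) ^ k" by (rule power_increasing) auto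
  finally show ?thesis .
next
  case False
  then show ?thesis using inv unfolding Inv_def by simp
qed

lemma finite_funs_bounded:
  "finite {m :: nat \<Rightarrow> nat. (\<forall>i. m i \<le> N) \<and> (\<forall>i. K \<le> i \<longrightarrow> m i = 0)}"
proof -
  let ?M = "{m :: nat \<Rightarrow> nat. (\<forall>i. m i \<le> N) \<and> (\<forall>i. K \<le> i \<longrightarrow> m i = 0)}"
  have "(\<lambda>m. map m [0..<K]) ` ?M \<subseteq> {xs. set xs \<subseteq> {..N} \<and> length xs = K}" by auto
  moreover have "finite {xs. set xs \<subseteq> {..N} \<and> length xs = K}" by (rule finite_lists_length_eq) simp
  ultimately have "finite ((\<lambda>m. map m [0..<K]) ` ?M)" by (rule finite_subset)
  moreover have "inj_on (\<lambda>m. map m [0..<K]) ?M"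
  proof (rule inj_onI)
    fix m m' assume m: "m \<in> ?M" and m': "m' \<in> ?M" and eq: "map m [0..<K] = map m' [0..<K]"
    show "m = m'"
    proof
      fix i show "m i = m' i"
      proof (cases "i < K")
        case True then show ?thesis using eq by (simp add: map_eq_conv)
      next
        case False then show ?thesis using m m' by simp
      qed
    qed
  qed
  ultimately show ?thesis by (rule finite_imageD)
qed

definition BS where "BS = {(m, j). j < k \<and> Inv m j}"
definition X where "X m j = Delta (deg m) (\<beta> j)"
definition BB where "BB = (\<lambda>(m, j). X m j) ` BS"

lemma finite_BS: "finite BS"
proof -
  have "BS \<subseteq> {m :: nat \<Rightarrow> nat. (\<forall>i. m i \<le> (R0 + 2) ^ k) \<and> (\<forall>i. k \<le> i \<longrightarrow> m i = 0)} \<times> {..<k}"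
    unfolding BS_def using m_bound by (auto simp: Inv_def)
  moreover have "finite ({m :: nat \<Rightarrow> nat. (\<forall>i. m i \<le> (R0 + 2) ^ k) \<and> (\<forall>i. k \<le> i \<longrightarrow> m i = 0)} \<times> {..<k})"
    using finite_funs_bounded by blast
  ultimately show ?thesis using finite_subset by blast
qed

lemma finite_BB: "finite BB"
  unfolding BB_def using finite_BS by simp

lemma X_in_BB: "j < k \<Longrightarrow> Inv m j \<Longrightarrow> X m j \<in> BB"
  unfolding BB_def BS_def by force

lemma w_sim:
  assumes "j < k" "j' < k" "sim j' j"
  obtains \<mu> where "\<mu> \<noteq> 0" "\<beta> j' = (\<lambda>l. \<mu> * \<beta> j l)" "w j' = \<mu> * w j"
proof -
  obtain \<mu> where mu: "\<mu> \<noteq> 0" "\<beta> j' = (\<lambda>l. \<mu> * \<beta> j l)" using sim_coeff assms by blast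
  have "w j' = \<mu> * ipf (\<beta> j) (p j')" unfolding w_def using mu by (simp add: ipf_smult)
  also have "ipf (\<beta> j) (p j') = w j" using K2 assms by blast
  finally show ?thesis using mu that by blast
qed

lemma bracket_cross:
  assumes j: "j < k" and j': "j' < k" and inv: "Inv m j" and inv': "Inv m' j'" and lt: "Lx j < Lx j'"
  shows "inspan BB (lie_bracket (X m j) (X m' j'))"
proof -
  have z: "ipf (\<beta> j') (deg m) = 0" using K4[OF j'] phi_later[OF inv j j' lt] by simp
  define x where "x = ipf (\<beta> j) (deg m')"
  have eq: "lie_bracket (X m j) (X m' j') = Delta (deg (\<lambda>i. m i + m' i)) (\<lambda>l. x * \<beta> j' l)"
    unfolding X_def Delta_bracket z x_def deg_add by simp
  show ?thesis
  proof (cases "phi j m' = 0")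
    case True
    then have "x = 0" unfolding x_def using K4[OF j] by simp
    then show ?thesis unfolding eq by (simp add: inspan_zero Delta_zero_fun)
  next
    case False
    then have "Inv (\<lambda>i. m i + m' i) j'" by (rule Inv_cross[OF j j' inv inv' lt])
    then have "X (\<lambda>i. m i + m' i) j' \<in> BB" using X_in_BB j' by blast
    then have "inspan BB (\<lambda>f. const x * X (\<lambda>i. m i + m' i) j' f)"
      by (intro inspan_smult inspan_base finite_BB)
    moreover have "Delta (deg (\<lambda>i. m i + m' i)) (\<lambda>l. x * \<beta> j' l) = (\<lambda>f. const x * X (\<lambda>i. m i + m' i) j' f)"
      unfolding X_def by (rule ext) (rule Delta_smult)
    ultimately show ?thesis unfolding eq by simp
  qed
qed

lemma bracket_BB:
  assumes j: "j < k" and j': "j' < k" and inv: "Inv m j" and inv': "Inv m' j'"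
  shows "inspan BB (lie_bracket (X m j) (X m' j'))"
proof -
  consider "Lx j = Lx j'" | "Lx j < Lx j'" | "Lx j' < Lx j" by linarith
  then show ?thesis
  proof cases
    case 1
    then have s: "sim j' j" using sim_iff_Lx j j' by simp
    have s2: "sim j j'" using s sim_sym j' by blast
    obtain \<mu> where mu: "\<mu> \<noteq> 0" "\<beta> j' = (\<lambda>l. \<mu> * \<beta> j l)" "w j' = \<mu> * w j" using w_sim[OF j j' s] by blast
    have a: "ipf (\<beta> j) (deg m') = w j" using K4[OF j] phi_own[OF inv' j' j s2] by simp
    have b: "ipf (\<beta> j') (deg m) = w j'" using K4[OF j'] phi_own[OF inv j j' s] by simp
    have "(\<lambda>l. ipf (\<beta> j) (deg m') * \<beta> j' l - ipf (\<beta> j') (deg m) * \<beta> j l) = (\<lambda>l. 0)"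
      unfolding a b using mu by (simp add: fun_eq_iff)
    then have "lie_bracket (X m j) (X m' j') = (\<lambda>f. 0)"
      unfolding X_def Delta_bracket using Delta_zero_fun by simp
    then show ?thesis using inspan_zero by simp
  next
    case 2
    then show ?thesis by (rule bracket_cross[OF j j' inv inv'])
  next
    case 3
    have "inspan BB (lie_bracket (X m' j') (X m j))" by (rule bracket_cross[OF j' j inv' inv 3])
    then have "inspan BB (\<lambda>f. const (-1) * lie_bracket (X m' j') (X m j) f)" by (rule inspan_smult)
    moreover have "(\<lambda>f. const (-1) * lie_bracket (X m' j') (X m j) f) = lie_bracket (X m j) (X m' j')"
    proof
      fix f
      have "const (-1) * lie_bracket (X m' j') (X m j) f = - lie_bracket (X m' j') (X m j) f"
        by (rule poly_mapping_eqI) (simp add: lookup_const_mult)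
      then show "const (-1) * lie_bracket (X m' j') (X m j) f = lie_bracket (X m j) (X m' j') f"
        by (simp add: lie_bracket_def)
    qed
    ultimately show ?thesis by simp
  qed
qed

theorem good_fin_dim: "fin_dim (lie_gen {Delta (p i) (\<beta> i) | i. i < k})"
proof (rule fin_dim_I[OF finite_BB])
  fix b assume "b \<in> BB"
  then show "linop b" unfolding BB_def X_def by (auto simp: linop_Delta)
next
  fix b b' assume "b \<in> BB" "b' \<in> BB"
  then obtain m j m' j' where "b = X m j" "j < k" "Inv m j" "b' = X m' j'" "j' < k" "Inv m' j'"
    unfolding BB_def BS_def by auto
  then show "inspan BB (lie_bracket b b')" using bracket_BB by simp
next
  fix d assume "d \<in> {Delta (p i) (\<beta> i) | i. i < k}"
  then obtain i where i: "i < k" "d = Delta (p i) (\<beta> i)" by blast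
  then have "d = X (dl i) i" unfolding X_def using deg_dl by simp
  then have "d \<in> BB" using X_in_BB Inv_dl i by simp
  then show "inspan BB d" by (rule inspan_base[OF finite_BB])
qed

end



lemma sum_fun_app: "(\<Sum>a\<in>A. F a) x = (\<Sum>a\<in>A. F a x)"
proof (cases "finite A")
  case True
  then show ?thesis by (induction A rule: finite_induct) auto
next
  case False
  then show ?thesis by simp
qed

lemma Ev_var: "Ev v (var l) = sg (sg l 1) (v l)"
proof (rule poly_mapping_eqI)
  fix y
  have "ipn v (sg l 1) = (\<Sum>la\<in>UNIV. if l = la then v la else 0)"
    unfolding ipn_def by (intro sum.cong) (auto simp: lookup_single when_def)
  then have "ipn v (sg l 1) = v l" by simp
  then show "lk (Ev v (var l)) y = lk (sg (sg l 1) (v l)) y"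
    by (auto simp: lookup_Ev var_def lookup_single when_def)
qed

lemma Delta_var: "Delta a v (var l) = sg (AP a + sg l 1) (v l)"
  by (simp add: Delta_eq Ev_var mult_single)

lemma lk_Delta_var: "lk (Delta a v (var l)) (AP a' + sg l 1) = (if a = a' then v l else 0)"
proof -
  have "AP a + sg l 1 = AP a' + sg l 1 \<longleftrightarrow> a = a'"
  proof
    assume "AP a + sg l 1 = AP a' + sg l 1"
    then have "AP a = AP a'" by simp
    then show "a = a'" by (metis lk_AP)
  qed simp
  then show ?thesis by (simp add: Delta_var lookup_single when_def)
qed

lemma vs_ops: "Vector_Spaces.vector_space (\<lambda>c (F :: ('n::finite, 'k::field) mpoly \<Rightarrow> ('n, 'k) mpoly). (\<lambda>f. const c * F f))"
proof (unfold_locales)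
  fix a b :: 'k and x y :: "('n, 'k) mpoly \<Rightarrow> ('n, 'k) mpoly"
  show "(\<lambda>f. const a * (x + y) f) = (\<lambda>f. const a * x f) + (\<lambda>f. const a * y f)"
    by (rule ext) (simp add: distrib_left)
  show "(\<lambda>f. const (a + b) * x f) = (\<lambda>f. const a * x f) + (\<lambda>f. const b * x f)"
    by (rule ext) (simp add: const_add distrib_right)
  show "(\<lambda>f. const a * (const b * x f)) = (\<lambda>f. const (a * b) * x f)"
    by (rule ext) (simp add: const_mult mult.assoc)
  show "(\<lambda>f. const 1 * x f) = x"
    by (rule ext) simp
qed

definition sz :: "('n::finite \<Rightarrow> nat) \<Rightarrow> nat" where "sz a = (\<Sum>l\<in>UNIV. a l)"

lemma fin_dim_bounded:
  fixes T :: "(('n::finite \<Rightarrow> nat) \<times> ('n \<Rightarrow> 'k::field)) set"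
  assumes fd: "fin_dim S"
    and TS: "\<And>a v. (a, v) \<in> T \<Longrightarrow> Delta a v \<in> S"
  shows "\<exists>N. \<forall>a v. (a, v) \<in> T \<longrightarrow> v \<noteq> (\<lambda>_. 0) \<longrightarrow> sz a < N"
proof -
  interpret VS: Vector_Spaces.vector_space "\<lambda>c (F :: ('n, 'k) mpoly \<Rightarrow> ('n, 'k) mpoly). (\<lambda>f. const c * F f)"
    by (rule vs_ops)
  obtain B where B: "finite B" "\<forall>a\<in>S. \<exists>c. a = (\<lambda>f. \<Sum>b\<in>B. const (c b) * b f)"
    using fd unfolding fin_dim_def by blast
  have inspan: "x \<in> VS.span B" if "x \<in> S" for x
  proof -
    have "\<exists>c. x = (\<lambda>f. \<Sum>b\<in>B. const (c b) * b f)" using B(2) that by (rule bspec)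
    then obtain c where c: "x = (\<lambda>f. \<Sum>b\<in>B. const (c b) * b f)" ..
    have sc: "(\<lambda>f. const (c b) * b f) \<in> VS.span B" if "b \<in> B" for b
      using VS.span_scale[OF VS.span_base[OF that], of "c b"] by simp
    have "(\<Sum>b\<in>B. (\<lambda>f. const (c b) * b f)) \<in> VS.span B"
      by (rule VS.span_sum) (rule sc)
    moreover have "(\<Sum>b\<in>B. (\<lambda>f. const (c b) * b f)) = x"
      unfolding c by (rule ext) (simp add: sum_fun_app)
    ultimately show ?thesis by simp
  qed
  let ?D = "{a. \<exists>v. (a, v) \<in> T \<and> v \<noteq> (\<lambda>_. 0)}"
  have "finite ?D"
  proof (rule ccontr)
    assume "infinite ?D"
    then obtain A where A: "finite A" "card A = Suc (card B)" "A \<subseteq> ?D"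
      using infinite_arbitrarily_large by blast
    define V where "V a = (SOME v. (a, v) \<in> T \<and> v \<noteq> (\<lambda>_. 0))" for a
    have V: "(a, V a) \<in> T \<and> V a \<noteq> (\<lambda>_. 0)" if "a \<in> A" for a
      using someI_ex[of "\<lambda>v. (a, v) \<in> T \<and> v \<noteq> (\<lambda>_. 0)"] A(3) that unfolding V_def by blast
    define Ops where "Ops = (\<lambda>a. Delta a (V a)) ` A"
    have inj: "inj_on (\<lambda>a. Delta a (V a)) A"
    proof (rule inj_onI)
      fix a a' assume a: "a \<in> A" and a': "a' \<in> A" and eq: "Delta a (V a) = Delta a' (V a')"
      obtain l where l: "V a l \<noteq> 0" using V[OF a] by auto
      have "lk (Delta a (V a) (var l)) (AP a + sg l 1) = V a l" by (simp only: lk_Delta_var) simp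
      moreover have "lk (Delta a' (V a') (var l)) (AP a + sg l 1) = (if a' = a then V a' l else 0)"
        by (simp only: lk_Delta_var)
      ultimately show "a = a'" using eq l by (auto split: if_splits)
    qed
    have indep: "VS.independent Ops"
    proof
      assume "VS.dependent Ops"
      then obtain t u where t: "finite t" "t \<subseteq> Ops" "(\<Sum>v\<in>t. (\<lambda>f. const (u v) * v f)) = 0" and
        ex: "\<exists>v\<in>t. u v \<noteq> 0"
        unfolding VS.dependent_explicit by blast
      from ex obtain o0 where o0: "o0 \<in> t" "u o0 \<noteq> 0" by blast
      obtain a0 where a0: "a0 \<in> A" "o0 = Delta a0 (V a0)" using o0 t(2) unfolding Ops_def by blast
      obtain l where l: "V a0 l \<noteq> 0" using V[OF a0(1)] by auto
      have "0 = lk ((\<Sum>v\<in>t. (\<lambda>f. const (u v) * v f)) (var l)) (AP a0 + sg l 1)"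
        using t(3) by simp
      also have "\<dots> = (\<Sum>v\<in>t. u v * lk (v (var l)) (AP a0 + sg l 1))"
        by (simp add: sum_fun_app lookup_sum lookup_const_mult)
      also have "\<dots> = (\<Sum>v\<in>t. if v = o0 then u o0 * V a0 l else 0)"
      proof (rule sum.cong)
        fix v assume v: "v \<in> t"
        then obtain a where a: "a \<in> A" "v = Delta a (V a)" using t(2) unfolding Ops_def by blast
        show "u v * lk (v (var l)) (AP a0 + sg l 1) = (if v = o0 then u o0 * V a0 l else 0)"
          using a a0 inj by (simp only: lk_Delta_var) (auto simp: inj_on_def)
      qed simp
      also have "\<dots> = u o0 * V a0 l" using o0 t(1) by (simp add: sum.delta')
      finally show False using o0 l by simp
    qed
    have "Ops \<subseteq> VS.span B"
    proof
      fix x assume "x \<in> Ops"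
      then obtain a where a: "a \<in> A" "x = Delta a (V a)" unfolding Ops_def by blast
      then have "x \<in> S" using TS V by blast
      then show "x \<in> VS.span B" by (rule inspan)
    qed
    then have "card Ops \<le> card B" using VS.independent_span_bound[OF B(1) indep] by blast
    moreover have "card Ops = card A" unfolding Ops_def using inj by (rule card_image)
    ultimately show False using A(2) by simp
  qed
  then have fin: "finite ?D" .
  show ?thesis
  proof (intro exI[of _ "Suc (Max (sz ` ?D))"] allI impI)
    fix a v assume "(a, v) \<in> T" "v \<noteq> (\<lambda>_. 0)"
    then have "a \<in> ?D" by blast
    then have "sz a \<le> Max (sz ` ?D)" using fin by (intro Max_ge) auto
    then show "sz a < Suc (Max (sz ` ?D))" by simp
  qed
qed



inductive_set TT :: "nat \<Rightarrow> (nat \<Rightarrow> 'n::finite \<Rightarrow> nat) \<Rightarrow> (nat \<Rightarrow> 'n \<Rightarrow> 'k::comm_ring_1) \<Rightarrow> (('n \<Rightarrow> nat) \<times> ('n \<Rightarrow> 'k)) set"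
  for k p \<beta> where
    gen: "i < k \<Longrightarrow> (p i, \<beta> i) \<in> TT k p \<beta>"
  | br: "(a, v) \<in> TT k p \<beta> \<Longrightarrow> (b, w) \<in> TT k p \<beta> \<Longrightarrow>
        ((\<lambda>l. a l + b l), (\<lambda>l. ipf v b * w l - ipf w a * v l)) \<in> TT k p \<beta>"

lemma TT_lie:
  assumes "(a, v) \<in> TT k p \<beta>"
  shows "Delta a v \<in> lie_gen {Delta (p i) (\<beta> i) | i. i < k}"
  using assms
proof (induction rule: TT.induct)
  case (gen i)
  then show ?case by (blast intro: lie_gen.base)
next
  case (br a v b w)
  then show ?case using lie_gen.bracket[OF br.IH] by (simp add: Delta_bracket)
qed

lemma sz_add: "sz (\<lambda>l. a l + b l) = sz a + sz b"
  by (simp add: sz_def sum.distrib)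

lemma TT_sz:
  assumes pos: "\<forall>i<k. p i \<noteq> (\<lambda>_. 0)" and "(a, v) \<in> TT k p \<beta>"
  shows "1 \<le> sz a"
  using assms(2)
proof (induction rule: TT.induct)
  case (gen i)
  then obtain l where "p i l \<noteq> 0" using pos by auto
  moreover have "p i l \<le> sz (p i)" unfolding sz_def by (rule member_le_sum) auto
  ultimately show ?case by simp
next
  case (br a v b w)
  then show ?case by (simp add: sz_add)
qed

lemma not_prop_comb:
  fixes v w :: "'n \<Rightarrow> 'k::field"
  assumes "\<not> proportional w v" "s \<noteq> 0"
  shows "(\<lambda>l. s * w l + t * v l) \<noteq> (\<lambda>_. 0)"
proof
  assume "(\<lambda>l. s * w l + t * v l) = (\<lambda>_. 0)"
  then have "\<forall>l. s * w l + t * v l = 0" by metis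
  then have "w = (\<lambda>l. (- t / s) * v l)" using assms(2)
    by (auto simp: fun_eq_iff field_simps eq_neg_iff_add_eq_0)
  then show False using assms(1) unfolding proportional_def by blast
qed

locale fdim =
  fixes k :: nat and p :: "nat \<Rightarrow> 'n::finite \<Rightarrow> nat" and \<beta> :: "nat \<Rightarrow> 'n \<Rightarrow> 'k::field_char_0" and N :: nat
  assumes pos: "\<forall>i<k. p i \<noteq> (\<lambda>_. 0)"
    and bnd: "\<And>a v. (a, v) \<in> TT k p \<beta> \<Longrightarrow> v \<noteq> (\<lambda>_. 0) \<Longrightarrow> sz a < N"
begin

abbreviation T where "T \<equiv> TT k p \<beta>"

lemma F1:
  assumes Y: "(a, v) \<in> T" and Z: "(b, w) \<in> T" and np: "\<not> proportional w v"
  shows "\<exists>r::nat. ipf v b + of_nat r * ipf v a = 0"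
proof (rule ccontr)
  assume H: "\<not> (\<exists>r::nat. ipf v b + of_nat r * ipf v a = 0)"
  have claim: "\<exists>s t. s \<noteq> 0 \<and> ((\<lambda>l. b l + m * a l), (\<lambda>l. s * w l + t * v l)) \<in> T" for m
  proof (induction m)
    case 0
    have "((\<lambda>l. b l + 0 * a l), (\<lambda>l. 1 * w l + 0 * v l)) = (b, w)" by simp
    then show ?case using Z by (intro exI[of _ 1] exI[of _ 0]) simp
  next
    case (Suc m)
    then obtain s t where st: "s \<noteq> 0" "((\<lambda>l. b l + m * a l), (\<lambda>l. s * w l + t * v l)) \<in> T" by blast
    let ?d = "\<lambda>l. b l + m * a l" and ?u = "\<lambda>l. s * w l + t * v l"
    have new: "((\<lambda>l. a l + ?d l), (\<lambda>l. ipf v ?d * ?u l - ipf ?u a * v l)) \<in> T"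
      by (rule TT.br[OF Y st(2)])
    have ipd: "ipf v ?d = ipf v b + of_nat m * ipf v a"
      by (simp add: ipf_def sum.distrib distrib_left sum_distrib_left mult_ac)
    have nz: "ipf v ?d \<noteq> 0" using H ipd by metis
    have e1: "(\<lambda>l. a l + ?d l) = (\<lambda>l. b l + Suc m * a l)" by (simp add: fun_eq_iff)
    have e2: "(\<lambda>l. ipf v ?d * ?u l - ipf ?u a * v l) = (\<lambda>l. (ipf v ?d * s) * w l + (ipf v ?d * t - ipf ?u a) * v l)"
      by (simp add: fun_eq_iff algebra_simps)
    show ?case using new nz st(1) unfolding e1 e2 by (intro exI[of _ "ipf v ?d * s"] exI) simp
  qed
  obtain s t where st: "s \<noteq> 0" "((\<lambda>l. b l + N * a l), (\<lambda>l. s * w l + t * v l)) \<in> T"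
    using claim by blast
  have "sz (\<lambda>l. b l + N * a l) < N" using bnd[OF st(2)] not_prop_comb[OF np st(1)] by blast
  moreover have "sz (\<lambda>l. b l + N * a l) = sz b + N * sz a"
    by (simp add: sz_def sum.distrib sum_distrib_left)
  moreover have "1 \<le> sz a" using TT_sz[OF pos Y] .
  ultimately show False by (metis add_lessD1 le_add2 mult_le_mono2 nat_mult_1_right not_le order_trans)
qed

lemma F2:
  assumes Y: "(a, v) \<in> T" and Z: "(b, (\<lambda>l. c * v l)) \<in> T" and vnz: "v \<noteq> (\<lambda>_. 0)" and c: "c \<noteq> 0"
  shows "ipf v a = ipf v b"
proof (rule ccontr)
  assume H: "ipf v a \<noteq> ipf v b"
  have claim: "\<exists>d x. x \<noteq> 0 \<and> (d, (\<lambda>l. x * v l)) \<in> T \<and> n \<le> sz d" for n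
  proof (induction n)
    case 0
    have "(\<lambda>l. 1 * v l) = v" by simp
    then show ?case using Y by (intro exI[of _ a] exI[of _ 1]) simp
  next
    case (Suc n)
    then obtain d x where dx: "x \<noteq> 0" "(d, (\<lambda>l. x * v l)) \<in> T" "n \<le> sz d" by blast
    have sd: "1 \<le> sz a" "1 \<le> sz b" using TT_sz[OF pos Y] TT_sz[OF pos Z] by auto
    show ?case
    proof (cases "ipf v d = ipf v a")
      case False
      have new: "((\<lambda>l. a l + d l), (\<lambda>l. ipf v d * (x * v l) - ipf (\<lambda>l. x * v l) a * v l)) \<in> T"
        by (rule TT.br[OF Y dx(2)])
      have e: "(\<lambda>l. ipf v d * (x * v l) - ipf (\<lambda>l. x * v l) a * v l) = (\<lambda>l. (x * (ipf v d - ipf v a)) * v l)"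
        by (simp add: fun_eq_iff ipf_smult algebra_simps)
      have "x * (ipf v d - ipf v a) \<noteq> 0" using False dx(1) by simp
      then show ?thesis using new dx(3) sd unfolding e by (intro exI[of _ "\<lambda>l. a l + d l"] exI[of _ "x * (ipf v d - ipf v a)"]) (simp add: sz_add)
    next
      case True
      then have F: "ipf v d \<noteq> ipf v b" using H by simp
      have new: "((\<lambda>l. b l + d l), (\<lambda>l. ipf (\<lambda>l. c * v l) d * (x * v l) - ipf (\<lambda>l. x * v l) b * (c * v l))) \<in> T"
        by (rule TT.br[OF Z dx(2)])
      have e: "(\<lambda>l. ipf (\<lambda>l. c * v l) d * (x * v l) - ipf (\<lambda>l. x * v l) b * (c * v l)) = (\<lambda>l. (c * x * (ipf v d - ipf v b)) * v l)"
        by (simp add: fun_eq_iff ipf_smult algebra_simps)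
      have "c * x * (ipf v d - ipf v b) \<noteq> 0" using F dx(1) c by simp
      then show ?thesis using new dx(3) sd unfolding e by (intro exI[of _ "\<lambda>l. b l + d l"] exI[of _ "c * x * (ipf v d - ipf v b)"]) (simp add: sz_add)
    qed
  qed
  obtain d x where dx: "x \<noteq> 0" "(d, (\<lambda>l. x * v l)) \<in> T" "N \<le> sz d" using claim by blast
  have "(\<lambda>l. x * v l) \<noteq> (\<lambda>_. 0)"
  proof
    assume "(\<lambda>l. x * v l) = (\<lambda>_. 0)"
    then have "v = (\<lambda>_. 0)" using dx(1) by (auto simp: fun_eq_iff)
    with vnz show False by simp
  qed
  then show False using bnd[OF dx(2)] dx(3) by simp
qed

end



lemma prop_scale_right:
  fixes x y :: "'n \<Rightarrow> 'k::field"
  assumes "c \<noteq> 0"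
  shows "proportional x (\<lambda>l. c * y l) \<longleftrightarrow> proportional x y"
proof
  assume "proportional x (\<lambda>l. c * y l)"
  then obtain d where "x = (\<lambda>l. d * (c * y l))" unfolding proportional_def by blast
  then have "x = (\<lambda>l. (d * c) * y l)" by (simp add: mult.assoc)
  then show "proportional x y" unfolding proportional_def by blast
next
  assume "proportional x y"
  then obtain d where "x = (\<lambda>l. d * y l)" unfolding proportional_def by blast
  then have "x = (\<lambda>l. (d / c) * (c * y l))" using assms by (simp add: fun_eq_iff)
  then show "proportional x (\<lambda>l. c * y l)" unfolding proportional_def by blast
qed

lemma prop_scale_left:
  fixes x y :: "'n \<Rightarrow> 'k::field"
  assumes "c \<noteq> 0"
  shows "proportional (\<lambda>l. c * x l) y \<longleftrightarrow> proportional x y"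
proof
  assume "proportional (\<lambda>l. c * x l) y"
  then obtain d where d: "(\<lambda>l. c * x l) = (\<lambda>l. d * y l)" unfolding proportional_def by blast
  have "x = (\<lambda>l. (d / c) * y l)"
  proof
    fix l have "c * x l = d * y l" using d by metis
    then show "x l = (d / c) * y l" using assms by (simp add: field_simps)
  qed
  then show "proportional x y" unfolding proportional_def by blast
next
  assume "proportional x y"
  then obtain d where "x = (\<lambda>l. d * y l)" unfolding proportional_def by blast
  then have "(\<lambda>l. c * x l) = (\<lambda>l. (c * d) * y l)" by (simp add: mult.assoc)
  then show "proportional (\<lambda>l. c * x l) y" unfolding proportional_def by blast
qed

lemma np_comb:
  fixes v w :: "'n \<Rightarrow> 'k::field"
  assumes np: "\<not> proportional w v" and v: "v \<noteq> (\<lambda>_. 0)" and \<alpha>: "\<alpha> \<noteq> 0"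
  shows "\<not> proportional v (\<lambda>l. \<alpha> * w l + \<gamma> * v l)"
proof
  assume "proportional v (\<lambda>l. \<alpha> * w l + \<gamma> * v l)"
  then obtain c where c: "v = (\<lambda>l. c * (\<alpha> * w l + \<gamma> * v l))" unfolding proportional_def by blast
  have c0: "c \<noteq> 0" using c v by auto
  have "w = (\<lambda>l. ((1 - c * \<gamma>) / (c * \<alpha>)) * v l)"
  proof
    fix l
    have "v l = c * (\<alpha> * w l + \<gamma> * v l)" using c by metis
    then show "w l = ((1 - c * \<gamma>) / (c * \<alpha>)) * v l" using c0 \<alpha> by (simp add: field_simps)
  qed
  then show False using np unfolding proportional_def by blast
qed

lemma not_prop_sym:
  fixes v w :: "'n \<Rightarrow> 'k::field"
  assumes "\<not> proportional w v" "v \<noteq> (\<lambda>_. 0)"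
  shows "\<not> proportional v w"
  using prop_sym assms by blast

context fdim begin

lemma F3:
  assumes Y: "(a, v) \<in> T" and Z: "(b, w) \<in> T" and vnz: "v \<noteq> (\<lambda>_. 0)" and wnz: "w \<noteq> (\<lambda>_. 0)"
    and np: "\<not> proportional w v" and e1: "ipf v b \<noteq> 0" and e2: "ipf w a \<noteq> 0"
  shows False
proof -
  have np': "\<not> proportional v w" using not_prop_sym[OF np vnz] .
  obtain r :: nat where r: "ipf v b + of_nat r * ipf v a = 0" using F1[OF Y Z np] by blast
  obtain s :: nat where s: "ipf w a + of_nat s * ipf w b = 0" using F1[OF Z Y np'] by blast
  define A where "A = ipf v a"
  define B where "B = ipf w b"
  have hb: "ipf v b = - (of_nat r * A)" using r unfolding A_def by (simp add: eq_neg_iff_add_eq_0)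
  have ha: "ipf w a = - (of_nat s * B)" using s unfolding B_def by (simp add: eq_neg_iff_add_eq_0)
  have A0: "A \<noteq> 0" using hb e1 by auto
  have B0: "B \<noteq> 0" using ha e2 by auto
  have r0: "r \<noteq> 0" using hb e1 by auto
  have s0: "s \<noteq> 0" using ha e2 by auto
  define u where "u = (\<lambda>l. ipf v b * w l - ipf w a * v l)"
  have W: "((\<lambda>l. a l + b l), u) \<in> T" unfolding u_def by (rule TT.br[OF Y Z])
  have ipu: "ipf u x = ipf v b * ipf w x - ipf w a * ipf v x" for x
    unfolding u_def by (rule ipf_lin)
  have ua: "ipf u a = A * B * (of_nat r * of_nat s + of_nat s)"
    unfolding ipu hb ha A_def[symmetric] B_def[symmetric] by (simp add: algebra_simps)
  have ub: "ipf u b = - (A * B * (of_nat r + of_nat r * of_nat s))"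
    unfolding ipu hb ha A_def[symmetric] B_def[symmetric] by (simp add: algebra_simps)
  have uab: "ipf u (\<lambda>l. a l + b l) = ipf u a + ipf u b" by (rule ipf_add2)
  have u_form: "u = (\<lambda>l. ipf v b * w l + (- ipf w a) * v l)" unfolding u_def by (simp add: fun_eq_iff)
  have npvu: "\<not> proportional v u" unfolding u_form by (rule np_comb[OF np vnz e1])
  have u_form2: "u = (\<lambda>l. (- ipf w a) * v l + ipf v b * w l)" unfolding u_def by (simp add: fun_eq_iff)
  have "- ipf w a \<noteq> 0" using e2 by simp
  then have "\<not> proportional w (\<lambda>l. (- ipf w a) * v l + ipf v b * w l)" by (rule np_comb[OF np' wnz])
  then have npwu: "\<not> proportional w u" unfolding u_form2 .
  obtain t1 :: nat where t1: "ipf u a + of_nat t1 * ipf u (\<lambda>l. a l + b l) = 0" using F1[OF W Y npvu] by blast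
  obtain t2 :: nat where t2: "ipf u b + of_nat t2 * ipf u (\<lambda>l. a l + b l) = 0" using F1[OF W Z npwu] by blast
  have "A * B * (of_nat (r * s + s + t1 * s) - of_nat (t1 * r)) = 0"
    using t1 unfolding uab ua ub by (simp add: algebra_simps)
  then have "(of_nat (r * s + s + t1 * s) :: 'k) = of_nat (t1 * r)" using A0 B0 by simp
  then have n1: "r * s + s + t1 * s = t1 * r" by (simp only: of_nat_eq_iff)
  have "A * B * (of_nat (t2 * s) - of_nat (r + r * s + t2 * r)) = 0"
    using t2 unfolding uab ua ub by (simp add: algebra_simps)
  then have "(of_nat (t2 * s) :: 'k) = of_nat (r + r * s + t2 * r)" using A0 B0 by simp
  then have n2: "t2 * s = r + r * s + t2 * r" by (simp only: of_nat_eq_iff)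
  have "t1 * s < t1 * r" using n1 s0 by linarith
  then have "s < r" by simp
  moreover have "t2 * r < t2 * s" using n2 r0 by linarith
  then have "r < s" by simp
  ultimately show False by simp
qed

end



context fdim begin

definition Ed where
  "Ed x y \<longleftrightarrow> x \<in> T \<and> y \<in> T \<and> snd x \<noteq> (\<lambda>_. 0) \<and> snd y \<noteq> (\<lambda>_. 0) \<and>
     \<not> proportional (snd x) (snd y) \<and> \<not> proportional (snd y) (snd x) \<and> ipf (snd x) (fst y) \<noteq> 0"

lemma nocycle:
  "0 < n \<Longrightarrow> f n = f 0 \<Longrightarrow> (\<forall>i<n. Ed (f i) (f (Suc i))) \<Longrightarrow> False"
proof (induction n arbitrary: f rule: less_induct)
  case (less n)
  note E = less.prems(3)
  have chord: "\<not> Ed (f j) (f i)" if ij: "i < j" "j < n" "j - i < n - 1" for i j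
  proof
    assume ed: "Ed (f j) (f i)"
    define g where "g t = (if t \<le> j - i then f (i + t) else f i)" for t
    have "\<forall>t<Suc (j - i). Ed (g t) (g (Suc t))"
    proof (intro allI impI)
      fix t assume t: "t < Suc (j - i)"
      show "Ed (g t) (g (Suc t))"
      proof (cases "t < j - i")
        case True
        then have "g t = f (i + t)" "g (Suc t) = f (Suc (i + t))" unfolding g_def by auto
        moreover have "i + t < n" using True ij by simp
        ultimately show ?thesis using E by simp
      next
        case False
        then have "t = j - i" using t by simp
        then have "g t = f j" "g (Suc t) = f i" unfolding g_def using ij by auto
        then show ?thesis using ed by simp
      qed
    qed
    moreover have "g (Suc (j - i)) = g 0" unfolding g_def by simp
    moreover have "Suc (j - i) < n" using ij by simp
    ultimately show False using less.IH[of "Suc (j - i)" g] by simp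
  qed
  have n1: "n \<noteq> 1"
  proof
    assume "n = 1"
    then have "Ed (f 0) (f 0)" using E less.prems(2) by (metis One_nat_def lessI)
    then show False unfolding Ed_def using prop_refl by blast
  qed
  show False
  proof (cases "n = 2")
    case True
    have e01: "Ed (f 0) (f 1)" using E True by simp
    have e10: "Ed (f 1) (f 0)" using E True less.prems(2) by (metis Suc_1 lessI numeral_2_eq_2 One_nat_def)
    show False
      using F3[of "fst (f 0)" "snd (f 0)" "fst (f 1)" "snd (f 1)"] e01 e10 unfolding Ed_def by simp
  next
    case False
    then have n3: "3 \<le> n" using n1 less.prems(1) by linarith
    let ?a = "\<lambda>i. fst (f i)" and ?v = "\<lambda>i. snd (f i)"
    have e01: "Ed (f 0) (f 1)" using E n3 by simp
    have e12: "Ed (f 1) (f 2)" using E n3 by (simp add: numeral_2_eq_2)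
    have elast: "Ed (f (n - 1)) (f 0)"
    proof -
      have "n - 1 < n" using n3 by simp
      then have "Ed (f (n - 1)) (f (Suc (n - 1)))" using E by blast
      moreover have "Suc (n - 1) = n" using n3 by simp
      ultimately show ?thesis using less.prems(2) by simp
    qed
    have z1: "ipf (?v 1) (?a 0) = 0"
      using chord[of 0 1] n3 e01 unfolding Ed_def by auto
    have npl: "\<not> proportional (?v (n - 1)) (?v 1) \<and> \<not> proportional (?v 1) (?v (n - 1))"
    proof (cases "n = 3")
      case True
      then show ?thesis using e12 unfolding Ed_def by (simp add: numeral_3_eq_3 numeral_2_eq_2)
    next
      case False
      then have n4: "4 \<le> n" using n3 by simp
      show ?thesis
      proof (rule ccontr)
        assume "\<not> ?thesis"
        then have pr: "proportional (?v (n - 1)) (?v 1)"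
          using prop_sym e12 elast unfolding Ed_def by blast
        obtain c where c: "c \<noteq> 0" "?v (n - 1) = (\<lambda>l. c * ?v 1 l)"
          using prop_coeff[OF pr] elast unfolding Ed_def by blast
        have "Ed (f (n - 1)) (f 2)"
          unfolding Ed_def
        proof (intro conjI)
          show "f (n - 1) \<in> T" "snd (f (n - 1)) \<noteq> (\<lambda>_. 0)" using elast unfolding Ed_def by auto
          show "f 2 \<in> T" "snd (f 2) \<noteq> (\<lambda>_. 0)" using e12 unfolding Ed_def by auto
          show "\<not> proportional (snd (f (n - 1))) (snd (f 2))"
            unfolding c(2) prop_scale_left[OF c(1)] using e12 unfolding Ed_def by blast
          show "\<not> proportional (snd (f 2)) (snd (f (n - 1)))"
            unfolding c(2) prop_scale_right[OF c(1)] using e12 unfolding Ed_def by blast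
          show "ipf (snd (f (n - 1))) (fst (f 2)) \<noteq> 0"
            unfolding c(2) ipf_smult using c(1) e12 unfolding Ed_def by simp
        qed
        moreover have "\<not> Ed (f (n - 1)) (f 2)" using chord[of 2 "n - 1"] n4 by simp
        ultimately show False by simp
      qed
    qed
    have z2: "ipf (?v (n - 1)) (?a 1) = 0"
      using chord[of 1 "n - 1"] n3 npl elast e12 unfolding Ed_def by auto
    define lm where "lm = ipf (?v 0) (?a 1)"
    have lam: "lm \<noteq> 0" using e01 unfolding Ed_def lm_def by simp
    define Y where "Y = ((\<lambda>l. ?a 0 l + ?a 1 l), (\<lambda>l. lm * ?v 1 l))"
    have YT: "Y \<in> T"
    proof -
      have "((\<lambda>l. ?a 0 l + ?a 1 l), (\<lambda>l. ipf (?v 0) (?a 1) * ?v 1 l - ipf (?v 1) (?a 0) * ?v 0 l)) \<in> T"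
        by (rule TT.br) (use e01 in \<open>auto simp: Ed_def\<close>)
      then show ?thesis unfolding Y_def z1 lm_def by simp
    qed
    have Ynz: "snd Y \<noteq> (\<lambda>_. 0)"
    proof
      assume "snd Y = (\<lambda>_. 0)"
      then have "\<forall>l. lm * ?v 1 l = 0" unfolding Y_def by (metis snd_conv)
      then have "?v 1 = (\<lambda>_. 0)" using lam by (auto simp: fun_eq_iff)
      then show False using e01 unfolding Ed_def by simp
    qed
    define g where "g t = (if t = 0 \<or> t = n - 1 then Y else f (Suc t))" for t
    have "\<forall>t<n - 1. Ed (g t) (g (Suc t))"
    proof (intro allI impI)
      fix t assume t: "t < n - 1"
      show "Ed (g t) (g (Suc t))"
      proof (cases "t = 0")
        case True
        then have g: "g t = Y" "g (Suc t) = f 2" unfolding g_def using n3 by (auto simp: numeral_2_eq_2)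
        show ?thesis unfolding g Ed_def
        proof (intro conjI)
          show "Y \<in> T" "snd Y \<noteq> (\<lambda>_. 0)" using YT Ynz .
          show "f 2 \<in> T" "snd (f 2) \<noteq> (\<lambda>_. 0)" using e12 unfolding Ed_def by auto
          show "\<not> proportional (snd Y) (snd (f 2))"
            unfolding Y_def snd_conv prop_scale_left[OF lam] using e12 unfolding Ed_def by blast
          show "\<not> proportional (snd (f 2)) (snd Y)"
            unfolding Y_def snd_conv prop_scale_right[OF lam] using e12 unfolding Ed_def by blast
          show "ipf (snd Y) (fst (f 2)) \<noteq> 0"
            unfolding Y_def snd_conv ipf_smult using lam e12 unfolding Ed_def by simp
        qed
      next
        case False
        show ?thesis
        proof (cases "Suc t = n - 1")
          case True
          then have g: "g t = f (n - 1)" "g (Suc t) = Y" unfolding g_def using False by auto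
          show ?thesis unfolding g Ed_def
          proof (intro conjI)
            show "Y \<in> T" "snd Y \<noteq> (\<lambda>_. 0)" using YT Ynz .
            show "f (n - 1) \<in> T" "snd (f (n - 1)) \<noteq> (\<lambda>_. 0)" using elast unfolding Ed_def by auto
            show "\<not> proportional (snd Y) (snd (f (n - 1)))"
              unfolding Y_def snd_conv prop_scale_left[OF lam] using npl by blast
            show "\<not> proportional (snd (f (n - 1))) (snd Y)"
              unfolding Y_def snd_conv prop_scale_right[OF lam] using npl by blast
            show "ipf (snd (f (n - 1))) (fst Y) \<noteq> 0"
              unfolding Y_def fst_conv ipf_add2 z2 using elast unfolding Ed_def by simp
          qed
        next
          case F2: False
          then have g: "g t = f (Suc t)" "g (Suc t) = f (Suc (Suc t))" unfolding g_def using False t by auto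
          have "Suc t < n" using t by simp
          then show ?thesis unfolding g using E by simp
        qed
      qed
    qed
    moreover have "g (n - 1) = g 0" unfolding g_def by simp
    moreover have "n - 1 < n" "0 < n - 1" using n3 by auto
    ultimately show False using less.IH[of "n - 1" g] by blast
  qed
qed

end



lemma ip_diff: "ip v (\<lambda>l. int (a l) - int (b l)) = ipf v a - ipf v b"
  by (simp add: ip_def ipf_def right_diff_distrib sum_subtractf)

lemma ip_nat: "ip v (\<lambda>l. int (a l)) = ipf v a"
  by (simp add: ip_def ipf_def)

lemma ip_comb: "ip v (\<lambda>l. int (a l) + int r * int (b l)) = ipf v a + of_nat r * ipf v b"
  by (simp add: ip_def ipf_def distrib_left sum.distrib sum_distrib_left mult_ac)

lemma sufficiency:
  fixes k :: nat and p :: "nat \<Rightarrow> 'n::finite \<Rightarrow> nat" and \<beta> :: "nat \<Rightarrow> 'n \<Rightarrow> 'k::field_char_0"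
  assumes beta_nz: "\<forall>i<k. \<beta> i \<noteq> (\<lambda>_. 0)"
    and bij: "bij_betw \<sigma> {..<k} {..<k}"
    and c1: "\<forall>i<k. \<forall>j<k. proportional (\<beta> (\<sigma> i)) (\<beta> (\<sigma> j)) \<longrightarrow>
          ip (\<beta> (\<sigma> i)) (\<lambda>l. int (p (\<sigma> i) l) - int (p (\<sigma> j) l)) = 0"
    and c2: "\<forall>i<k. \<forall>j<k. \<not> proportional (\<beta> (\<sigma> i)) (\<beta> (\<sigma> j)) \<and> i < j \<longrightarrow>
          ip (\<beta> (\<sigma> j)) (\<lambda>l. int (p (\<sigma> i) l)) = 0 \<and>
          (\<exists>r::nat. ip (\<beta> (\<sigma> i)) (\<lambda>l. int (p (\<sigma> j) l) + int r * int (p (\<sigma> i) l)) = 0)"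
  shows "fin_dim (lie_gen {Delta (p i) (\<beta> i) | i. i < k})"
proof -
  have sk: "\<sigma> i < k" if "i < k" for i using bij that unfolding bij_betw_def by auto
  interpret G: good k "\<lambda>i. p (\<sigma> i)" "\<lambda>i. \<beta> (\<sigma> i)"
  proof
    fix i assume "i < k" then show "\<beta> (\<sigma> i) \<noteq> (\<lambda>_. 0)" using beta_nz sk by blast
  next
    fix i j assume "i < k" "j < k" "proportional (\<beta> (\<sigma> i)) (\<beta> (\<sigma> j))"
    then show "ipf (\<beta> (\<sigma> i)) (p (\<sigma> i)) = ipf (\<beta> (\<sigma> i)) (p (\<sigma> j))"
      using c1 by (simp add: ip_diff)
  next
    fix i j assume "i < k" "j < k" "\<not> proportional (\<beta> (\<sigma> i)) (\<beta> (\<sigma> j))" "i < j"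
    then show "ipf (\<beta> (\<sigma> j)) (p (\<sigma> i)) = 0" using c2 by (simp add: ip_nat)
  next
    fix i j assume "i < k" "j < k" "\<not> proportional (\<beta> (\<sigma> i)) (\<beta> (\<sigma> j))" "i < j"
    then show "\<exists>r. ipf (\<beta> (\<sigma> i)) (p (\<sigma> j)) + of_nat r * ipf (\<beta> (\<sigma> i)) (p (\<sigma> i)) = 0"
      using c2 by (simp add: ip_comb)
  qed
  have "{Delta (p (\<sigma> i)) (\<beta> (\<sigma> i)) | i. i < k} = {Delta (p i) (\<beta> i) | i. i < k}"
  proof
    show "{Delta (p (\<sigma> i)) (\<beta> (\<sigma> i)) | i. i < k} \<subseteq> {Delta (p i) (\<beta> i) | i. i < k}"
      using sk by blast
    show "{Delta (p i) (\<beta> i) | i. i < k} \<subseteq> {Delta (p (\<sigma> i)) (\<beta> (\<sigma> i)) | i. i < k}"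
    proof
      fix x assume "x \<in> {Delta (p i) (\<beta> i) | i. i < k}"
      then obtain i where i: "i < k" "x = Delta (p i) (\<beta> i)" by blast
      then have "i \<in> \<sigma> ` {..<k}" using bij unfolding bij_betw_def by auto
      then obtain j where "j < k" "i = \<sigma> j" by auto
      then show "x \<in> {Delta (p (\<sigma> i)) (\<beta> (\<sigma> i)) | i. i < k}" using i by blast
    qed
  qed
  then show ?thesis using G.good_fin_dim by simp
qed

lemma necessity:
  fixes k :: nat and p :: "nat \<Rightarrow> 'n::finite \<Rightarrow> nat" and \<beta> :: "nat \<Rightarrow> 'n \<Rightarrow> 'k::field_char_0"
  assumes beta_nz: "\<forall>i<k. \<beta> i \<noteq> (\<lambda>_. 0)"
    and pos_weight: "\<forall>i<k. p i \<noteq> (\<lambda>_. 0)"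
    and fd: "fin_dim (lie_gen {Delta (p i) (\<beta> i) | i. i < k})"
  shows "\<exists>\<sigma>. bij_betw \<sigma> {..<k} {..<k} \<and>
      (\<forall>i<k. \<forall>j<k. proportional (\<beta> (\<sigma> i)) (\<beta> (\<sigma> j)) \<longrightarrow>
          ip (\<beta> (\<sigma> i)) (\<lambda>l. int (p (\<sigma> i) l) - int (p (\<sigma> j) l)) = 0) \<and>
      (\<forall>i<k. \<forall>j<k. \<not> proportional (\<beta> (\<sigma> i)) (\<beta> (\<sigma> j)) \<and> i < j \<longrightarrow>
          ip (\<beta> (\<sigma> j)) (\<lambda>l. int (p (\<sigma> i) l)) = 0 \<and>
          (\<exists>r::nat. ip (\<beta> (\<sigma> i)) (\<lambda>l. int (p (\<sigma> j) l) + int r * int (p (\<sigma> i) l)) = 0))"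
proof -
  obtain N where N: "\<forall>a v. (a, v) \<in> TT k p \<beta> \<longrightarrow> v \<noteq> (\<lambda>_. 0) \<longrightarrow> sz a < N"
    using fin_dim_bounded[OF fd, of "TT k p \<beta>"] TT_lie by blast
  interpret F: fdim k p \<beta> N
    using pos_weight N by unfold_locales blast+
  define Rg where "Rg = {(i, j). i < k \<and> j < k \<and> \<not> proportional (\<beta> i) (\<beta> j) \<and>
      \<not> proportional (\<beta> j) (\<beta> i) \<and> ipf (\<beta> i) (p j) \<noteq> 0}"
  have RgEd: "F.Ed (p i, \<beta> i) (p j, \<beta> j)" if "(i, j) \<in> Rg" for i j
    using that beta_nz unfolding Rg_def F.Ed_def by (auto intro: TT.gen)
  have acyc: "(x, x) \<notin> Rg\<^sup>+" for x
  proof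
    assume "(x, x) \<in> Rg\<^sup>+"
    then obtain n where n: "0 < n" "(x, x) \<in> Rg ^^ n" by (auto simp: trancl_power)
    then obtain f where f: "f 0 = x" "f n = x" "\<forall>i<n. (f i, f (Suc i)) \<in> Rg"
      by (auto simp: relpow_fun_conv)
    show False
      using F.nocycle[of n "\<lambda>i. (p (f i), \<beta> (f i))"] n(1) f RgEd by simp
  qed
  have RgS: "Rg\<^sup>+ \<subseteq> {..<k} \<times> {..<k}"
    by (rule trancl_subset_Sigma) (auto simp: Rg_def)
  define key where "key i = card {j. (j, i) \<in> Rg\<^sup>+}" for i
  have key_lt: "key i < key j" if ij: "(i, j) \<in> Rg" for i j
  proof -
    have fin: "finite {x. (x, j) \<in> Rg\<^sup>+}"
      by (rule finite_subset[of _ "{..<k}"]) (use RgS in auto)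
    have "{x. (x, i) \<in> Rg\<^sup>+} \<subset> {x. (x, j) \<in> Rg\<^sup>+}"
    proof
      show "{x. (x, i) \<in> Rg\<^sup>+} \<subseteq> {x. (x, j) \<in> Rg\<^sup>+}"
        using ij by (auto intro: trancl_into_trancl)
      have "i \<in> {x. (x, j) \<in> Rg\<^sup>+}" using ij by auto
      moreover have "i \<notin> {x. (x, i) \<in> Rg\<^sup>+}" using acyc by auto
      ultimately show "{x. (x, i) \<in> Rg\<^sup>+} \<noteq> {x. (x, j) \<in> Rg\<^sup>+}" by blast
    qed
    then show ?thesis unfolding key_def using fin by (rule psubset_card_mono[rotated])
  qed
  define xs where "xs = sort_key key [0..<k]"
  have dxs: "distinct xs" and sxs: "set xs = {..<k}" and lxs: "length xs = k"
    unfolding xs_def by auto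
  define \<sigma> where "\<sigma> i = xs ! i" for i
  have bij: "bij_betw \<sigma> {..<k} {..<k}"
    unfolding \<sigma>_def[abs_def] using bij_betw_nth[OF dxs] lxs sxs by simp
  have sk: "\<sigma> i < k" if "i < k" for i using bij that unfolding bij_betw_def by auto
  have mono: "key (\<sigma> i) \<le> key (\<sigma> j)" if "i \<le> j" "j < k" for i j
  proof -
    have "sorted (map key xs)" unfolding xs_def by simp
    then have "map key xs ! i \<le> map key xs ! j" using that lxs by (intro sorted_nth_mono) auto
    then show ?thesis using that lxs unfolding \<sigma>_def by simp
  qed
  show ?thesis
  proof (intro exI[of _ \<sigma>] conjI allI impI)
    show "bij_betw \<sigma> {..<k} {..<k}" by (rule bij)
  next
    fix i j assume i: "i < k" and j: "j < k" and pr: "proportional (\<beta> (\<sigma> i)) (\<beta> (\<sigma> j))"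
    obtain c where c: "c \<noteq> 0" "\<beta> (\<sigma> i) = (\<lambda>l. c * \<beta> (\<sigma> j) l)"
      using prop_coeff[OF pr] beta_nz sk[OF i] by blast
    have Zi: "(p (\<sigma> i), \<beta> (\<sigma> i)) \<in> TT k p \<beta>" by (rule TT.gen[OF sk[OF i]])
    then have Zi': "(p (\<sigma> i), (\<lambda>l. c * \<beta> (\<sigma> j) l)) \<in> TT k p \<beta>" using c(2) by simp
    have Yj: "(p (\<sigma> j), \<beta> (\<sigma> j)) \<in> TT k p \<beta>" by (rule TT.gen[OF sk[OF j]])
    have "ipf (\<beta> (\<sigma> j)) (p (\<sigma> j)) = ipf (\<beta> (\<sigma> j)) (p (\<sigma> i))"
      by (rule F.F2[OF Yj Zi' _ c(1)]) (use beta_nz sk[OF j] in auto)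
    then show "ip (\<beta> (\<sigma> i)) (\<lambda>l. int (p (\<sigma> i) l) - int (p (\<sigma> j) l)) = 0"
      unfolding ip_diff c(2) ipf_smult by simp
  next
    fix i j assume i: "i < k" and j: "j < k" and h: "\<not> proportional (\<beta> (\<sigma> i)) (\<beta> (\<sigma> j)) \<and> i < j"
    have np': "\<not> proportional (\<beta> (\<sigma> j)) (\<beta> (\<sigma> i))"
      using not_prop_sym[of "\<beta> (\<sigma> j)" "\<beta> (\<sigma> i)"] h beta_nz sk[OF i] sk[OF j] prop_sym by blast
    show "ip (\<beta> (\<sigma> j)) (\<lambda>l. int (p (\<sigma> i) l)) = 0"
    proof (rule ccontr)
      assume "ip (\<beta> (\<sigma> j)) (\<lambda>l. int (p (\<sigma> i) l)) \<noteq> 0"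
      then have "(\<sigma> j, \<sigma> i) \<in> Rg" unfolding Rg_def using sk[OF i] sk[OF j] h np' by (simp add: ip_nat)
      then have "key (\<sigma> j) < key (\<sigma> i)" by (rule key_lt)
      moreover have "key (\<sigma> i) \<le> key (\<sigma> j)" using mono h j by simp
      ultimately show False by simp
    qed
    obtain r :: nat where "ipf (\<beta> (\<sigma> i)) (p (\<sigma> j)) + of_nat r * ipf (\<beta> (\<sigma> i)) (p (\<sigma> i)) = 0"
      using F.F1[OF TT.gen[OF sk[OF i]] TT.gen[OF sk[OF j]] np'] by blast
    then show "\<exists>r::nat. ip (\<beta> (\<sigma> i)) (\<lambda>l. int (p (\<sigma> j) l) + int r * int (p (\<sigma> i) l)) = 0"
      by (intro exI[of _ r]) (simp add: ip_comb)
  qed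
qed

theorem theorem2:
  fixes k :: nat
    and p :: "nat \<Rightarrow> 'n::finite \<Rightarrow> nat"
    and \<beta> :: "nat \<Rightarrow> 'n \<Rightarrow> 'k::field_char_0"
  assumes beta_nz: "\<forall>i<k. \<beta> i \<noteq> (\<lambda>_. 0)"
    and pos_weight: "\<forall>i<k. p i \<noteq> (\<lambda>_. 0)"
  shows "fin_dim (lie_gen {Delta (p i) (\<beta> i) | i. i < k}) \<longleftrightarrow>
    (\<exists>\<sigma>. bij_betw \<sigma> {..<k} {..<k} \<and>
      (\<forall>i<k. \<forall>j<k. proportional (\<beta> (\<sigma> i)) (\<beta> (\<sigma> j)) \<longrightarrow>
          ip (\<beta> (\<sigma> i)) (\<lambda>l. int (p (\<sigma> i) l) - int (p (\<sigma> j) l)) = 0) \<and>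
      (\<forall>i<k. \<forall>j<k. \<not> proportional (\<beta> (\<sigma> i)) (\<beta> (\<sigma> j)) \<and> i < j \<longrightarrow>
          ip (\<beta> (\<sigma> j)) (\<lambda>l. int (p (\<sigma> i) l)) = 0 \<and>
          (\<exists>r::nat. ip (\<beta> (\<sigma> i)) (\<lambda>l. int (p (\<sigma> j) l) + int r * int (p (\<sigma> i) l)) = 0)))"
  using necessity[OF beta_nz pos_weight] sufficiency[OF beta_nz] by blast


end
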